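(* Let $\theta\in\mathbb R$. If $\theta\neq\underline\theta$, then the maximizer of $\sup_{Y\in\mathcal Y}\mathbb E[F(Y;\theta)]$ is unique up to a $\mathbb P$-null set: if $Y_1^*,Y_2^*\in\arg\max_{Y\in\mathcal Y}\mathbb E[F(Y;\theta)]$ then $\mathbb P(Y_1^*=Y_2^* )=1$. If $\theta=\underline\theta$ and $k>0$, then $Y^*\in\mathcal Y$ is a maximizer of $\mathbb E[F(Y;\underline\theta)]$ over $\mathcal Y$ if and only if $\mathbb P\big(Y^*\in\{0,\gamma(1+k^{-1/(1-\alpha)})\}\big)=1$.
   Context: Let $B$ be a one-dimensional standard Brownian motion on a complete probability space $(\Omega,\mathcal F,\mathbb P)$ with augmented natural filtration $(\mathcal F_t)$. Constants $\mu,r\in\mathbb R$, $\sigma>0$, $\phi:=(\mu-r)/\sigma\neq0$; pricing kernel $Z_t=\exp(-\phi B_t-(r+\phi^2/2)t)$. Fix $\tau>0$, $\alpha\in(0,1)$, $k\ge0$, $\gamma>0$. $U(x)=x^\alpha$ for $x\ge0$, $U(x)=-k|x|^\alpha$ for $x<0$. $\mathcal Y$ is the set of $\mathcal F_\tau$-measurable random variables $Y\ge0$ with $\mathbb E[Z_\tau Y]\le1$. $F(y;\theta):=U(y-\gamma)+\theta y^\alpha$ for $y\ge0,\theta\in\mathbb R$, and $\underline\theta:=-(1+k^{1/(1-\alpha)})^{1-\alpha}$. *)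

theory Defs
  imports "HOL-Probability.Probability"
begin

definition brownian_motion :: "'a measure \<Rightarrow> (real \<Rightarrow> 'a \<Rightarrow> real) \<Rightarrow> bool" where
  "brownian_motion M B \<longleftrightarrow>
     prob_space M \<and>
     (\<forall>t. B t \<in> borel_measurable M) \<and>
     (AE \<omega> in M. B 0 \<omega> = 0) \<and>
     (AE \<omega> in M. continuous_on {0..} (\<lambda>t. B t \<omega>)) \<and>
     (\<forall>s t. 0 \<le> s \<and> s < t \<longrightarrow>
        distributed M lborel (\<lambda>\<omega>. B t \<omega> - B s \<omega>) (normal_density 0 (sqrt (t - s)))) \<and>
     (\<forall>(ts :: nat \<Rightarrow> real) n. 0 \<le> ts 0 \<and> (\<forall>i<n. ts i < ts (Suc i)) \<longrightarrow>
        prob_space.indep_vars M (\<lambda>_. borel) (\<lambda>i \<omega>. B (ts (Suc i)) \<omega> - B (ts i) \<omega>) {..<n})"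

definition augmented_filtration :: "'a measure \<Rightarrow> (real \<Rightarrow> 'a \<Rightarrow> real) \<Rightarrow> real \<Rightarrow> 'a measure" where
  "augmented_filtration M B t =
     sigma (space M)
       ({B s -` A \<inter> space M | s A. 0 \<le> s \<and> s \<le> t \<and> A \<in> sets borel} \<union> null_sets M)"

definition mpr :: "real \<Rightarrow> real \<Rightarrow> real \<Rightarrow> real" where
  "mpr \<mu> r \<sigma> = (\<mu> - r) / \<sigma>"

definition pricing_kernel ::
  "real \<Rightarrow> real \<Rightarrow> real \<Rightarrow> (real \<Rightarrow> 'a \<Rightarrow> real) \<Rightarrow> real \<Rightarrow> 'a \<Rightarrow> real" where
  "pricing_kernel \<mu> r \<sigma> B t \<omega> =
     exp (- mpr \<mu> r \<sigma> * B t \<omega> - (r + (mpr \<mu> r \<sigma>)\<^sup>2 / 2) * t)"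

definition admissible ::
  "'a measure \<Rightarrow> (real \<Rightarrow> 'a \<Rightarrow> real) \<Rightarrow> real \<Rightarrow> real \<Rightarrow> real \<Rightarrow> real \<Rightarrow> ('a \<Rightarrow> real) set" where
  "admissible M B \<mu> r \<sigma> \<tau> =
     {Y. Y \<in> borel_measurable (augmented_filtration M B \<tau>) \<and>
         (\<forall>\<omega>\<in>space M. 0 \<le> Y \<omega>) \<and>
         (\<integral>\<^sup>+\<omega>. ennreal (pricing_kernel \<mu> r \<sigma> B \<tau> \<omega> * Y \<omega>) \<partial>M) \<le> 1}"

definition U :: "real \<Rightarrow> real \<Rightarrow> real \<Rightarrow> real" where
  "U \<alpha> k x = (if 0 \<le> x then x powr \<alpha> else - k * \<bar>x\<bar> powr \<alpha>)"

definition Fobj :: "real \<Rightarrow> real \<Rightarrow> real \<Rightarrow> real \<Rightarrow> real \<Rightarrow> real" where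
  "Fobj \<alpha> k \<gamma> \<theta> y = U \<alpha> k (y - \<gamma>) + \<theta> * y powr \<alpha>"

definition lower_theta :: "real \<Rightarrow> real \<Rightarrow> real" where
  "lower_theta \<alpha> k = - ((1 + k powr (1 / (1 - \<alpha>))) powr (1 - \<alpha>))"

definition ext_expectation :: "'a measure \<Rightarrow> ('a \<Rightarrow> real) \<Rightarrow> ereal" where
  "ext_expectation M X =
     enn2ereal (\<integral>\<^sup>+\<omega>. ennreal (X \<omega>) \<partial>M) - enn2ereal (\<integral>\<^sup>+\<omega>. ennreal (- X \<omega>) \<partial>M)"

definition is_maximizer ::
  "'a measure \<Rightarrow> (real \<Rightarrow> 'a \<Rightarrow> real) \<Rightarrow> real \<Rightarrow> real \<Rightarrow> real \<Rightarrow> real \<Rightarrow>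
   real \<Rightarrow> real \<Rightarrow> real \<Rightarrow> real \<Rightarrow> ('a \<Rightarrow> real) \<Rightarrow> bool" where
  "is_maximizer M B \<mu> r \<sigma> \<tau> \<alpha> k \<gamma> \<theta> Y \<longleftrightarrow>
     Y \<in> admissible M B \<mu> r \<sigma> \<tau> \<and>
     (\<forall>Y' \<in> admissible M B \<mu> r \<sigma> \<tau>.
        ext_expectation M (\<lambda>\<omega>. Fobj \<alpha> k \<gamma> \<theta> (Y' \<omega>))
          \<le> ext_expectation M (\<lambda>\<omega>. Fobj \<alpha> k \<gamma> \<theta> (Y \<omega>)))"

end

theory Submission
  imports Defs
begin


lemma young_le:
  fixes \<alpha> x c :: real
  assumes "0 < \<alpha>" "\<alpha> < 1" "0 \<le> x" "0 \<le> c"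
  shows "x powr \<alpha> * c powr (1-\<alpha>) \<le> \<alpha>*x + (1-\<alpha>)*c"
proof (cases "x = 0 \<or> c = 0")
  case True then show ?thesis using assms by auto
next
  case False then show ?thesis using assms Youngs_inequality_0[of \<alpha> "1-\<alpha>" x c] by auto
qed

lemma bern_strict:
  fixes \<alpha> t :: real
  assumes "0 < \<alpha>" "\<alpha> < 1" "0 < t" "t \<noteq> 1"
  shows "t powr \<alpha> < \<alpha>*t + (1-\<alpha>)"
proof -
  define h where "h = (\<lambda>t::real. \<alpha>*t + (1-\<alpha>) - t powr \<alpha>)"
  have D: "\<And>s. s > 0 \<Longrightarrow> (h has_real_derivative (\<alpha> - \<alpha> * s powr (\<alpha>-1))) (at s)"
    unfolding h_def by (auto intro!: derivative_eq_intros)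
  have h1: "h 1 = 0" unfolding h_def by simp
  show ?thesis
  proof (cases "t < 1")
    case True
    obtain z where z: "t < z" "z < 1" "h 1 - h t = (1 - t) * (\<alpha> - \<alpha> * z powr (\<alpha>-1))"
      using MVT2[of t 1 h "\<lambda>s. \<alpha> - \<alpha> * s powr (\<alpha>-1)"] True D assms by force
    have "z powr (\<alpha>-1) > 1" using z assms
      by (metis diff_less_0_iff_less powr_less_mono2_neg powr_one_eq_one less_trans)
    then have "\<alpha> - \<alpha> * z powr (\<alpha>-1) < 0" using assms by (simp add: mult_less_cancel_left1)
    moreover have "1 - t > 0" using True by simp
    ultimately have "(1 - t) * (\<alpha> - \<alpha> * z powr (\<alpha>-1)) < 0" by (simp add: mult_pos_neg)
    then have "h t > 0" using z h1 by simp
    then show ?thesis unfolding h_def by simp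
  next
    case False
    then have tt: "1 < t" using assms by simp
    obtain z where z: "1 < z" "z < t" "h t - h 1 = (t - 1) * (\<alpha> - \<alpha> * z powr (\<alpha>-1))"
      using MVT2[of 1 t h "\<lambda>s. \<alpha> - \<alpha> * s powr (\<alpha>-1)"] tt D assms by force
    have "z powr (\<alpha>-1) < 1" using z assms
      by (metis diff_less_0_iff_less powr_less_mono2_neg powr_one_eq_one zero_less_one)
    then have "\<alpha> - \<alpha> * z powr (\<alpha>-1) > 0" using assms by simp
    then have "h t > 0" using z h1 tt by simp
    then show ?thesis unfolding h_def by simp
  qed
qed

lemma young_strict:
  fixes \<alpha> x c :: real
  assumes "0 < \<alpha>" "\<alpha> < 1" "0 < x" "0 < c" "x \<noteq> c"
  shows "x powr \<alpha> * c powr (1-\<alpha>) < \<alpha>*x + (1-\<alpha>)*c"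
proof -
  have "x / c \<noteq> 1" using assms by simp
  then have "(x/c) powr \<alpha> < \<alpha>*(x/c) + (1-\<alpha>)" using bern_strict[of \<alpha> "x/c"] assms by simp
  then have "c * (x/c) powr \<alpha> < c * (\<alpha>*(x/c) + (1-\<alpha>))" using assms by simp
  moreover have "c * (x/c) powr \<alpha> = x powr \<alpha> * c powr (1-\<alpha>)"
    using assms by (simp add: powr_divide powr_diff)
  moreover have "c * (\<alpha>*(x/c) + (1-\<alpha>)) = \<alpha>*x + (1-\<alpha>)*c" using assms by (simp add: field_simps)
  ultimately show ?thesis by simp
qed

lemma absorb:
  fixes \<alpha> b e u :: real
  assumes "0 < \<alpha>" "\<alpha> < 1" "0 \<le> b" "0 < e" "0 \<le> u"
  shows "b * u powr \<alpha> \<le> e*u + b powr (1/(1-\<alpha>)) * e powr (-\<alpha>/(1-\<alpha>))"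
proof (cases "b = 0 \<or> u = 0")
  case True then show ?thesis using assms by auto
next
  case False
  define c where "c = b powr (1/(1-\<alpha>)) * e powr (-\<alpha>/(1-\<alpha>))"
  have c0: "c \<ge> 0" unfolding c_def by simp
  have "c powr (1-\<alpha>) = b * e powr (-\<alpha>)"
    unfolding c_def using assms False
    by (simp add: powr_mult powr_powr)
  then have "(e*u) powr \<alpha> * c powr (1-\<alpha>) = b * u powr \<alpha>"
    using assms by (simp add: powr_mult powr_minus field_simps)
  moreover have "(e*u) powr \<alpha> * c powr (1-\<alpha>) \<le> \<alpha>*(e*u) + (1-\<alpha>)*c"
    using young_le[of \<alpha> "e*u" c] assms c0 by simp
  moreover have "\<alpha>*(e*u) \<le> e*u" using assms by (intro mult_left_le_one_le) auto
  moreover have "(1-\<alpha>)*c \<le> c" using assms c0 by (intro mult_left_le_one_le) auto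
  ultimately show ?thesis unfolding c_def by simp
qed

lemma subadd_powr:
  fixes \<alpha> a b :: real
  assumes "0 < \<alpha>" "\<alpha> < 1" "0 \<le> a" "0 \<le> b"
  shows "(a+b) powr \<alpha> \<le> a powr \<alpha> + b powr \<alpha>"
proof (cases "a = 0 \<or> b = 0")
  case True then show ?thesis using assms by auto
next
  case False
  then have ab: "a > 0" "b > 0" using assms by auto
  have "a powr (\<alpha>-1) \<ge> (a+b) powr (\<alpha>-1)" using ab assms
    by (intro powr_mono2') auto
  then have 1: "a * a powr (\<alpha>-1) \<ge> a * (a+b) powr (\<alpha>-1)" using ab by simp
  have "b powr (\<alpha>-1) \<ge> (a+b) powr (\<alpha>-1)" using ab assms
    by (intro powr_mono2') auto
  then have 2: "b * b powr (\<alpha>-1) \<ge> b * (a+b) powr (\<alpha>-1)" using ab by simp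
  have "(a+b) powr \<alpha> = (a+b) * (a+b) powr (\<alpha>-1)" using ab by (simp add: powr_diff)
  also have "\<dots> = a * (a+b) powr (\<alpha>-1) + b * (a+b) powr (\<alpha>-1)" by (simp add: algebra_simps)
  also have "\<dots> \<le> a * a powr (\<alpha>-1) + b * b powr (\<alpha>-1)" using 1 2 by simp
  also have "\<dots> = a powr \<alpha> + b powr \<alpha>" using ab by (simp add: powr_diff)
  finally show ?thesis .
qed



lemma F_upper:
  assumes "0 < \<alpha>" "\<alpha> < 1" "0 \<le> k" "0 < \<gamma>" "0 \<le> y"
  shows "Fobj \<alpha> k \<gamma> \<theta> y \<le> (1 + \<bar>\<theta>\<bar>) * y powr \<alpha>"
proof -
  have "U \<alpha> k (y - \<gamma>) \<le> y powr \<alpha>"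
  proof (cases "0 \<le> y - \<gamma>")
    case True then show ?thesis using assms by (simp add: U_def powr_mono2)
  next
    case False
    have "0 \<le> k * \<bar>y - \<gamma>\<bar> powr \<alpha>" using assms by simp
    moreover have "U \<alpha> k (y - \<gamma>) = - (k * \<bar>y - \<gamma>\<bar> powr \<alpha>)" using False by (simp add: U_def)
    moreover have "0 \<le> y powr \<alpha>" by simp
    ultimately show ?thesis by linarith
  qed
  moreover have "\<theta> * y powr \<alpha> \<le> \<bar>\<theta>\<bar> * y powr \<alpha>" by (intro mult_right_mono) auto
  ultimately show ?thesis unfolding Fobj_def by (simp add: algebra_simps)
qed

lemma F_lower:
  assumes "0 < \<alpha>" "\<alpha> < 1" "0 \<le> k" "0 < \<gamma>" "0 \<le> y"
  shows "Fobj \<alpha> k \<gamma> \<theta> y \<ge> - (k * \<gamma> powr \<alpha>) - \<bar>\<theta>\<bar> * y powr \<alpha>"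
proof -
  have "U \<alpha> k (y - \<gamma>) \<ge> - (k * \<gamma> powr \<alpha>)"
  proof (cases "0 \<le> y - \<gamma>")
    case True
    have "0 \<le> k * \<gamma> powr \<alpha>" using assms by simp
    moreover have "U \<alpha> k (y - \<gamma>) = (y-\<gamma>) powr \<alpha>" using True by (simp add: U_def)
    moreover have "0 \<le> (y-\<gamma>) powr \<alpha>" by simp
    ultimately show ?thesis by linarith
  next
    case False
    then have "\<bar>y - \<gamma>\<bar> powr \<alpha> \<le> \<gamma> powr \<alpha>" using assms by (intro powr_mono2) auto
    then have "k * \<bar>y - \<gamma>\<bar> powr \<alpha> \<le> k * \<gamma> powr \<alpha>" using assms by (intro mult_left_mono) auto
    then show ?thesis using False by (simp add: U_def)
  qed
  moreover have "\<theta> * y powr \<alpha> \<ge> - \<bar>\<theta>\<bar> * y powr \<alpha>"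
  proof -
    have "- \<bar>\<theta>\<bar> * y powr \<alpha> \<le> \<theta> * y powr \<alpha>" by (intro mult_right_mono) auto
    then show ?thesis by simp
  qed
  ultimately show ?thesis unfolding Fobj_def by (simp add: algebra_simps)
qed

lemma F_abs:
  assumes "0 < \<alpha>" "\<alpha> < 1" "0 \<le> k" "0 < \<gamma>" "0 \<le> y"
  shows "\<bar>Fobj \<alpha> k \<gamma> \<theta> y\<bar> \<le> k * \<gamma> powr \<alpha> + (1 + \<bar>\<theta>\<bar>) * y powr \<alpha>"
proof -
  have a: "0 \<le> k * \<gamma> powr \<alpha>" "0 \<le> y powr \<alpha>" "0 \<le> \<bar>\<theta>\<bar> * y powr \<alpha>" using assms by simp_all
  have b: "(1 + \<bar>\<theta>\<bar>) * y powr \<alpha> = y powr \<alpha> + \<bar>\<theta>\<bar> * y powr \<alpha>" by (simp add: algebra_simps)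
  show ?thesis unfolding abs_le_iff using F_upper[OF assms, of \<theta>] F_lower[OF assms, of \<theta>] a b
    by linarith
qed

lemma U_alt: "0 < \<alpha> \<Longrightarrow> U \<alpha> k x = (max x 0) powr \<alpha> - k * (max (-x) 0) powr \<alpha>"
  by (auto simp: U_def max_def)

lemma F_cont:
  assumes "0 < \<alpha>" "S \<subseteq> {0..}"
  shows "continuous_on S (Fobj \<alpha> k \<gamma> \<theta>)"
proof -
  let ?g = "\<lambda>y. (max (y-\<gamma>) 0) powr \<alpha> - k * (max (-(y-\<gamma>)) 0) powr \<alpha>
            + \<theta> * (max y 0) powr \<alpha>"
  have e: "\<forall>y\<in>S. ?g y = Fobj \<alpha> k \<gamma> \<theta> y"
  proof
    fix y assume "y \<in> S"
    then have "y \<ge> 0" using assms by auto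
    then show "?g y = Fobj \<alpha> k \<gamma> \<theta> y"
      using assms by (cases "y \<ge> \<gamma>") (auto simp: Fobj_def U_def max_def)
  qed
  have "continuous_on UNIV ?g" using assms
    by (intro continuous_intros continuous_on_powr') auto
  then have "continuous_on S ?g" using continuous_on_subset by blast
  then show ?thesis using e by (auto intro: continuous_on_eq)
qed



lemma m_facts:
  fixes \<alpha> k :: real
  assumes "0 < \<alpha>" "\<alpha> < 1" "0 < k"
  defines "m \<equiv> k powr (1/(1-\<alpha>))"
  shows "m > 0" "m powr (1-\<alpha>) = k" "k powr (- 1/(1-\<alpha>)) = 1/m"
    "lower_theta \<alpha> k = - ((1+m) powr (1-\<alpha>))"
proof -
  show "m > 0" unfolding m_def using assms by simp
  show "m powr (1-\<alpha>) = k" unfolding m_def using assms by (simp add: powr_powr)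
  have "k powr (- 1/(1-\<alpha>)) = k powr (- (1/(1-\<alpha>)))" by simp
  then show "k powr (- 1/(1-\<alpha>)) = 1/m" unfolding m_def by (simp add: powr_minus divide_inverse)
  show "lower_theta \<alpha> k = - ((1+m) powr (1-\<alpha>))" unfolding lower_theta_def m_def ..
qed

lemma F_at0: "0 < \<alpha> \<Longrightarrow> 0 < \<gamma> \<Longrightarrow> Fobj \<alpha> k \<gamma> \<theta> 0 = - (k * \<gamma> powr \<alpha>)"
  by (simp add: Fobj_def U_def)

lemma LT_main_pos:
  fixes \<alpha> k \<gamma> y :: real
  assumes "0 < \<alpha>" "\<alpha> < 1" "0 < k" "0 < \<gamma>" "0 \<le> y"
  shows "Fobj \<alpha> k \<gamma> (lower_theta \<alpha> k) y \<le> - (k * \<gamma> powr \<alpha>)"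
    and "0 < y \<Longrightarrow> y \<noteq> \<gamma> * (1 + k powr (- 1 / (1 - \<alpha>))) \<Longrightarrow>
         Fobj \<alpha> k \<gamma> (lower_theta \<alpha> k) y < - (k * \<gamma> powr \<alpha>)"
proof -
  define m where "m = k powr (1/(1-\<alpha>))"
  note mf = m_facts[OF assms(1-3), folded m_def]
  define P where "P = (1+m) powr (1-\<alpha>)"
  have P0: "P > 0" unfolding P_def using mf by simp
  have kP: "k < P" unfolding P_def using mf assms
    by (metis powr_less_mono2 diff_gt_0_iff_gt less_add_same_cancel2 less_le zero_less_one)
  have th: "lower_theta \<alpha> k = - P" using mf P_def by simp
  have "(Fobj \<alpha> k \<gamma> (lower_theta \<alpha> k) y \<le> - (k * \<gamma> powr \<alpha>)) \<and>
        (0 < y \<longrightarrow> y \<noteq> \<gamma> * (1 + k powr (- 1 / (1 - \<alpha>))) \<longrightarrow>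
         Fobj \<alpha> k \<gamma> (lower_theta \<alpha> k) y < - (k * \<gamma> powr \<alpha>))"
  proof (cases "y < \<gamma>")
    case True
    have F: "Fobj \<alpha> k \<gamma> (lower_theta \<alpha> k) y = - (k * (\<gamma> - y) powr \<alpha>) - P * y powr \<alpha>"
      using True by (simp add: Fobj_def U_def th)
    have "\<gamma> powr \<alpha> \<le> (\<gamma> - y) powr \<alpha> + y powr \<alpha>"
      using subadd_powr[of \<alpha> "\<gamma> - y" y] assms True by simp
    then have 1: "k * \<gamma> powr \<alpha> \<le> k * (\<gamma> - y) powr \<alpha> + k * y powr \<alpha>"
      using assms by (metis distrib_left mult_left_mono less_imp_le)
    have 2: "k * y powr \<alpha> \<le> P * y powr \<alpha>" using kP by (intro mult_right_mono) auto
    have 3: "0 < y \<Longrightarrow> k * y powr \<alpha> < P * y powr \<alpha>" using kP by (intro mult_strict_right_mono) auto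
    show ?thesis unfolding F
    proof (intro conjI impI)
      show "- (k * (\<gamma> - y) powr \<alpha>) - P * y powr \<alpha> \<le> - (k * \<gamma> powr \<alpha>)" using 1 2 by linarith
    next
      assume "0 < y"
      then show "- (k * (\<gamma> - y) powr \<alpha>) - P * y powr \<alpha> < - (k * \<gamma> powr \<alpha>)" using 1 3 by linarith
    qed
  next
    case False
    then have yg: "\<gamma> \<le> y" by simp
    then have y0: "y > 0" using assms by simp
    define a where "a = y - \<gamma>"
    define Q where "Q = y powr (\<alpha>-1)"
    define c1 where "c1 = y / (1+m)"
    define c2 where "c2 = m * y / (1+m)"
    have a0: "a \<ge> 0" using yg a_def by simp
    have Q0: "Q > 0" using y0 Q_def by simp
    have c10: "c1 > 0" "c2 > 0" using y0 mf c1_def c2_def by auto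
    have yQ: "y powr (1-\<alpha>) * Q = 1" using y0 unfolding Q_def by (simp flip: powr_add)
    have E1: "c1 powr (1-\<alpha>) * P * Q = 1"
      unfolding c1_def P_def using y0 mf yQ by (simp add: powr_divide)
    have E2: "c2 powr (1-\<alpha>) * P * Q = k"
      unfolding c2_def P_def using y0 mf yQ by (simp add: powr_divide powr_mult)
    have yPQ: "y * P * Q = P * y powr \<alpha>"
      using y0 unfolding Q_def by (simp add: powr_diff)
    have Y1: "a powr \<alpha> * c1 powr (1-\<alpha>) \<le> \<alpha>*a + (1-\<alpha>)*c1"
      using young_le[of \<alpha> a c1] assms a0 c10 by simp
    have Y2: "\<gamma> powr \<alpha> * c2 powr (1-\<alpha>) \<le> \<alpha>*\<gamma> + (1-\<alpha>)*c2"
      using young_le[of \<alpha> \<gamma> c2] assms c10 by simp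
    have ne: "y \<noteq> \<gamma> * (1 + k powr (- 1 / (1 - \<alpha>))) \<Longrightarrow> a \<noteq> c1"
    proof
      assume "y \<noteq> \<gamma> * (1 + k powr (- 1 / (1 - \<alpha>)))" "a = c1"
      then have "(y - \<gamma>) * (1+m) = y" unfolding a_def c1_def using mf by (simp add: field_simps)
      then have "y * m = \<gamma> * (1+m)" by (simp add: algebra_simps)
      then have "y = \<gamma> * (1 + 1/m)" using mf by (simp add: field_simps)
      then show False using \<open>y \<noteq> _\<close> mf by simp
    qed
    have Y1s: "y \<noteq> \<gamma> * (1 + k powr (- 1 / (1 - \<alpha>))) \<Longrightarrow>
        a powr \<alpha> * c1 powr (1-\<alpha>) < \<alpha>*a + (1-\<alpha>)*c1"
    proof -
      assume yn: "y \<noteq> \<gamma> * (1 + k powr (- 1 / (1 - \<alpha>)))"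
      show ?thesis
      proof (cases "a = 0")
        case True then show ?thesis using c10 assms by simp
      next
        case False then show ?thesis using young_strict[of \<alpha> a c1] assms a0 c10 ne[OF yn] by simp
      qed
    qed
    have PQ: "P * Q > 0" using P0 Q0 by simp
    have Fa: "Fobj \<alpha> k \<gamma> (lower_theta \<alpha> k) y = a powr \<alpha> - P * y powr \<alpha>"
      using yg by (simp add: Fobj_def U_def th a_def)
    have e1: "a powr \<alpha> = (a powr \<alpha> * c1 powr (1-\<alpha>)) * (P * Q)"
      using E1 by (simp add: algebra_simps)
    have e2: "k * \<gamma> powr \<alpha> = (\<gamma> powr \<alpha> * c2 powr (1-\<alpha>)) * (P * Q)"
      using E2 by (simp add: algebra_simps)
    have sum: "(\<alpha>*a + (1-\<alpha>)*c1) * (P*Q) + (\<alpha>*\<gamma> + (1-\<alpha>)*c2) * (P*Q) = P * y powr \<alpha>"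
    proof -
      have "c1 + c2 = (y * (1+m))/(1+m)" unfolding c1_def c2_def by (simp add: add_divide_distrib algebra_simps)
      also have "\<dots> = y" using mf by simp
      finally have "c1 + c2 = y" .
      then have "\<alpha>*(c1 + c2) = \<alpha>*y" by simp
      then have "\<alpha>*c1 + \<alpha>*c2 = \<alpha>*y" by (simp only: distrib_left)
      then have "(\<alpha>*a + (1-\<alpha>)*c1) + (\<alpha>*\<gamma> + (1-\<alpha>)*c2) = y"
        unfolding a_def using \<open>c1 + c2 = y\<close> by (simp add: algebra_simps)
      then have "((\<alpha>*a + (1-\<alpha>)*c1) + (\<alpha>*\<gamma> + (1-\<alpha>)*c2)) * (P*Q) = y * P * Q"
        by simp
      then have "(\<alpha>*a + (1-\<alpha>)*c1) * (P*Q) + (\<alpha>*\<gamma> + (1-\<alpha>)*c2) * (P*Q) = y * P * Q"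
        by (simp only: distrib_right)
      then show ?thesis using yPQ by simp
    qed
    have i1: "a powr \<alpha> \<le> (\<alpha>*a + (1-\<alpha>)*c1) * (P*Q)"
    proof -
      have "(a powr \<alpha> * c1 powr (1-\<alpha>)) * (P*Q) \<le> (\<alpha>*a + (1-\<alpha>)*c1) * (P*Q)" using Y1 PQ by (intro mult_right_mono) auto
      then show ?thesis using e1 by linarith
    qed
    have i2: "k * \<gamma> powr \<alpha> \<le> (\<alpha>*\<gamma> + (1-\<alpha>)*c2) * (P*Q)"
    proof -
      have "(\<gamma> powr \<alpha> * c2 powr (1-\<alpha>)) * (P*Q) \<le> (\<alpha>*\<gamma> + (1-\<alpha>)*c2) * (P*Q)" using Y2 PQ by (intro mult_right_mono) auto
      then show ?thesis using e2 by linarith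
    qed
    have i1s: "y \<noteq> \<gamma> * (1 + k powr (- 1 / (1 - \<alpha>))) \<Longrightarrow> a powr \<alpha> < (\<alpha>*a + (1-\<alpha>)*c1) * (P*Q)"
    proof -
      assume yn: "y \<noteq> \<gamma> * (1 + k powr (- 1 / (1 - \<alpha>)))"
      have "(a powr \<alpha> * c1 powr (1-\<alpha>)) * (P*Q) < (\<alpha>*a + (1-\<alpha>)*c1) * (P*Q)"
        using Y1s[OF yn] PQ by (intro mult_strict_right_mono) auto
      then show ?thesis using e1 by linarith
    qed
    show ?thesis unfolding Fa
    proof (intro conjI impI)
      show "a powr \<alpha> - P * y powr \<alpha> \<le> - (k * \<gamma> powr \<alpha>)" using i1 i2 sum by linarith
    next
      assume "y \<noteq> \<gamma> * (1 + k powr (- 1 / (1 - \<alpha>)))"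
      then show "a powr \<alpha> - P * y powr \<alpha> < - (k * \<gamma> powr \<alpha>)" using i1s i2 sum by linarith
    qed
  qed
  then show "Fobj \<alpha> k \<gamma> (lower_theta \<alpha> k) y \<le> - (k * \<gamma> powr \<alpha>)"
    and "0 < y \<Longrightarrow> y \<noteq> \<gamma> * (1 + k powr (- 1 / (1 - \<alpha>))) \<Longrightarrow>
         Fobj \<alpha> k \<gamma> (lower_theta \<alpha> k) y < - (k * \<gamma> powr \<alpha>)" by auto
qed



definition Amax :: "(real \<Rightarrow> real) \<Rightarrow> real \<Rightarrow> real set" where
  "Amax f z = {y. 0 \<le> y \<and> (\<forall>u\<ge>0. f u - z*u \<le> f y - z*y)}"

lemma F_ystar:
  fixes \<alpha> k \<gamma> :: real
  assumes "0 < \<alpha>" "\<alpha> < 1" "0 < k" "0 < \<gamma>"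
  shows "Fobj \<alpha> k \<gamma> (lower_theta \<alpha> k) (\<gamma> * (1 + k powr (- 1 / (1 - \<alpha>)))) = - (k * \<gamma> powr \<alpha>)"
proof -
  define m where "m = k powr (1/(1-\<alpha>))"
  note mf = m_facts[OF assms(1-3), folded m_def]
  define q where "q = m powr \<alpha>"
  have q0: "q > 0" using mf q_def by simp
  have ys: "\<gamma> * (1 + k powr (- 1 / (1 - \<alpha>))) = \<gamma> * (1+m) / m" using mf by (simp add: field_simps)
  have d: "\<gamma> * (1+m) / m - \<gamma> = \<gamma> / m" using mf by (simp add: field_simps)
  have nn: "0 \<le> \<gamma> * (1+m) / m - \<gamma>" unfolding d using mf assms by simp
  have t1: "(\<gamma> / m) powr \<alpha> = \<gamma> powr \<alpha> / q" using mf assms q_def by (simp add: powr_divide)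
  have t2: "(\<gamma> * (1+m) / m) powr \<alpha> = \<gamma> powr \<alpha> * (1+m) powr \<alpha> / q"
    using mf assms q_def by (simp add: powr_divide powr_mult)
  have t3: "(1+m) powr (1-\<alpha>) * (1+m) powr \<alpha> = 1 + m" using mf by (simp flip: powr_add)
  have t4: "m / q = k" using mf q_def by (simp add: powr_diff)
  have "Fobj \<alpha> k \<gamma> (lower_theta \<alpha> k) (\<gamma> * (1+m) / m)
        = \<gamma> powr \<alpha> / q - (1+m) powr (1-\<alpha>) * (\<gamma> powr \<alpha> * (1+m) powr \<alpha> / q)"
    using nn mf by (simp add: Fobj_def U_def d t1 t2)
  also have "\<dots> = \<gamma> powr \<alpha> / q - ((1+m) powr (1-\<alpha>) * (1+m) powr \<alpha>) * \<gamma> powr \<alpha> / q"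
    by (simp add: ac_simps)
  also have "\<dots> = \<gamma> powr \<alpha> / q - (1+m) * \<gamma> powr \<alpha> / q"
    by (simp only: t3)
  also have "\<dots> = - ((m / q) * \<gamma> powr \<alpha>)" using q0 by (simp add: field_simps)
  also have "\<dots> = - (k * \<gamma> powr \<alpha>)" using t4 by simp
  finally show ?thesis using ys by simp
qed

lemma LT_le_all:
  fixes \<alpha> k \<gamma> y :: real
  assumes "0 < \<alpha>" "\<alpha> < 1" "0 \<le> k" "0 < \<gamma>" "0 \<le> y"
  shows "Fobj \<alpha> k \<gamma> (lower_theta \<alpha> k) y \<le> - (k * \<gamma> powr \<alpha>)"
proof (cases "k = 0")
  case True
  have lt: "lower_theta \<alpha> k = -1" using True assms by (simp add: lower_theta_def)
  have "U \<alpha> k (y - \<gamma>) \<le> y powr \<alpha>"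
  proof (cases "0 \<le> y - \<gamma>")
    case True then show ?thesis using assms by (simp add: U_def powr_mono2)
  next
    case False then show ?thesis using assms \<open>k = 0\<close> by (simp add: U_def)
  qed
  then show ?thesis unfolding Fobj_def lt using True by simp
next
  case False
  then show ?thesis using LT_main_pos(1)[of \<alpha> k \<gamma> y] assms by simp
qed



lemma S_empty_nonneg:
  assumes "0 < \<alpha>" "\<alpha> < 1" "0 \<le> k" "0 < \<gamma>" "0 \<le> \<theta>"
  shows "y \<notin> Amax (Fobj \<alpha> k \<gamma> \<theta>) 0"
proof
  assume y: "y \<in> Amax (Fobj \<alpha> k \<gamma> \<theta>) 0"
  define c where "c = \<bar>Fobj \<alpha> k \<gamma> \<theta> y\<bar> + 1"
  define t where "t = c powr (1/\<alpha>)"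
  have c0: "c > 0" unfolding c_def by simp
  have tc: "t powr \<alpha> = c" unfolding t_def using c0 assms by (simp add: powr_powr)
  have t0: "t \<ge> 0" unfolding t_def by simp
  have "Fobj \<alpha> k \<gamma> \<theta> (\<gamma> + t) = t powr \<alpha> + \<theta> * (\<gamma> + t) powr \<alpha>"
    using t0 by (simp add: Fobj_def U_def)
  also have "\<dots> \<ge> t powr \<alpha>" using assms by simp
  finally have "Fobj \<alpha> k \<gamma> \<theta> (\<gamma> + t) > Fobj \<alpha> k \<gamma> \<theta> y" using tc c_def by linarith
  moreover have "Fobj \<alpha> k \<gamma> \<theta> (\<gamma> + t) \<le> Fobj \<alpha> k \<gamma> \<theta> y"
    using y t0 assms unfolding Amax_def by auto
  ultimately show False by simp
qed

lemma D1:
  assumes "0 < s" "s < \<gamma>"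
  shows "(Fobj \<alpha> k \<gamma> \<theta> has_real_derivative (k*\<alpha>*(\<gamma>-s) powr (\<alpha>-1) + \<theta>*\<alpha>* s powr (\<alpha>-1))) (at s)"
proof (rule has_field_derivative_transform_within_open[where S="{0<..<\<gamma>}"])
  show "((\<lambda>s. - (k * (\<gamma> - s) powr \<alpha>) + \<theta> * s powr \<alpha>) has_real_derivative
      (k*\<alpha>*(\<gamma>-s) powr (\<alpha>-1) + \<theta>*\<alpha>* s powr (\<alpha>-1))) (at s)"
    using assms by (auto intro!: derivative_eq_intros)
  show "open {0<..<\<gamma>}" by simp
  show "s \<in> {0<..<\<gamma>}" using assms by simp
  fix x assume "x \<in> {0<..<\<gamma>}"
  then show "- (k * (\<gamma> - x) powr \<alpha>) + \<theta> * x powr \<alpha> = Fobj \<alpha> k \<gamma> \<theta> x"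
    by (simp add: Fobj_def U_def)
qed

lemma D2:
  assumes "0 < \<gamma>" "\<gamma> < s"
  shows "(Fobj \<alpha> k \<gamma> \<theta> has_real_derivative (\<alpha>*(s-\<gamma>) powr (\<alpha>-1) + \<theta>*\<alpha>* s powr (\<alpha>-1))) (at s)"
proof (rule has_field_derivative_transform_within_open[where S="{\<gamma><..}"])
  show "((\<lambda>s. (s - \<gamma>) powr \<alpha> + \<theta> * s powr \<alpha>) has_real_derivative
      (\<alpha>*(s-\<gamma>) powr (\<alpha>-1) + \<theta>*\<alpha>* s powr (\<alpha>-1))) (at s)"
    using assms by (auto intro!: derivative_eq_intros)
  show "open {\<gamma><..}" by simp
  show "s \<in> {\<gamma><..}" using assms by simp
  fix x assume "x \<in> {\<gamma><..}"
  then show "(x - \<gamma>) powr \<alpha> + \<theta> * x powr \<alpha> = Fobj \<alpha> k \<gamma> \<theta> x"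
    by (simp add: Fobj_def U_def)
qed

lemma F_theta: "Fobj \<alpha> k \<gamma> \<theta> y = Fobj \<alpha> k \<gamma> \<theta>' y + (\<theta> - \<theta>') * y powr \<alpha>"
  by (simp add: Fobj_def algebra_simps)

lemma crit:
  fixes \<alpha> k \<gamma> \<theta> y :: real
  assumes a: "0 < \<alpha>" "\<alpha> < 1" "0 \<le> k" "0 < \<gamma>" "\<theta> < 0"
    and yS: "y \<in> Amax (Fobj \<alpha> k \<gamma> \<theta>) 0" and y0: "0 < y"
  shows "\<gamma> < y \<and> (y - \<gamma>) powr (\<alpha>-1) = - \<theta> * y powr (\<alpha>-1)"
proof -
  define f where "f = Fobj \<alpha> k \<gamma> \<theta>"
  have ymax: "\<And>u. 0 \<le> u \<Longrightarrow> f u \<le> f y" using yS unfolding Amax_def f_def by auto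
  have cont: "\<And>a b. 0 \<le> a \<Longrightarrow> continuous_on {a..b} f"
    unfolding f_def using a by (intro F_cont) auto
  have "\<not> y < \<gamma>"
  proof
    assume yg: "y < \<gamma>"
    define D where "D = (\<lambda>s. k*\<alpha>*(\<gamma>-s) powr (\<alpha>-1) + \<theta>*\<alpha>* s powr (\<alpha>-1))"
    have der: "\<And>s. 0 < s \<Longrightarrow> s < \<gamma> \<Longrightarrow> (f has_real_derivative D s) (at s)"
      unfolding f_def D_def by (rule D1)
    have "D y = 0"
    proof (rule DERIV_local_max[OF der[OF y0 yg], of y])
      show "0 < y" by fact
      show "\<forall>u. \<bar>y - u\<bar> < y \<longrightarrow> f u \<le> f y" using ymax by auto
    qed
    have "\<exists>l z. 0 < z \<and> z < y \<and> DERIV f z :> l \<and> f y - f 0 = (y - 0) * l"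
    proof (rule MVT)
      show "0 < y" by fact
      show "continuous_on {0..y} f" using cont[of 0 y] by simp
      fix x assume "0 < x" "x < y"
      then show "f differentiable (at x)" using der[of x] yg real_differentiable_def by force
    qed
    then obtain l z where z: "0 < z" "z < y" "DERIV f z :> l" "f y - f 0 = (y - 0) * l" by blast
    have "l = D z" using DERIV_unique[OF z(3) der[of z]] z yg by simp
    have "(\<gamma> - z) powr (\<alpha>-1) \<le> (\<gamma> - y) powr (\<alpha>-1)"
      using z yg a by (intro powr_mono2') auto
    then have 1: "k*\<alpha>*(\<gamma>-z) powr (\<alpha>-1) \<le> k*\<alpha>*(\<gamma>-y) powr (\<alpha>-1)"
      using a by (intro mult_left_mono) auto
    have "y powr (\<alpha>-1) < z powr (\<alpha>-1)"
      using z a by (intro powr_less_mono2_neg) auto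
    then have 2: "\<theta>*\<alpha>* z powr (\<alpha>-1) < \<theta>*\<alpha>* y powr (\<alpha>-1)"
      using a by (intro mult_strict_left_mono_neg) (auto simp: mult_neg_pos)
    have "l < 0" using \<open>l = D z\<close> \<open>D y = 0\<close> 1 2 unfolding D_def by linarith
    then have "y * l < 0" using y0 by (simp add: mult_pos_neg)
    then have "f y < f 0" using z by simp
    then show False using ymax[of 0] by simp
  qed
  moreover have "y \<noteq> \<gamma>"
  proof
    assume yg: "y = \<gamma>"
    define D where "D = (\<lambda>s. \<alpha>*(s-\<gamma>) powr (\<alpha>-1) + \<theta>*\<alpha>* s powr (\<alpha>-1))"
    have der: "\<And>s. \<gamma> < s \<Longrightarrow> (f has_real_derivative D s) (at s)"
      unfolding f_def D_def using a by (intro D2) auto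
    define \<delta> where "\<delta> = \<gamma> * (-\<theta>) powr (1/(\<alpha>-1))"
    have d0: "\<delta> > 0" unfolding \<delta>_def using a by simp
    have "\<exists>l z. \<gamma> < z \<and> z < \<gamma> + \<delta> \<and> DERIV f z :> l \<and> f (\<gamma>+\<delta>) - f \<gamma> = (\<gamma> + \<delta> - \<gamma>) * l"
    proof (rule MVT)
      show "\<gamma> < \<gamma> + \<delta>" using d0 by simp
      show "continuous_on {\<gamma>..\<gamma>+\<delta>} f" using cont[of \<gamma> "\<gamma>+\<delta>"] a by simp
      fix x assume "\<gamma> < x" "x < \<gamma> + \<delta>"
      then show "f differentiable (at x)" using der[of x] real_differentiable_def by force
    qed
    then obtain l z where z: "\<gamma> < z" "z < \<gamma> + \<delta>" "DERIV f z :> l" "f (\<gamma>+\<delta>) - f \<gamma> = (\<gamma> + \<delta> - \<gamma>) * l" by blast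
    have "l = D z" using DERIV_unique[OF z(3) der[of z]] z by simp
    have dp: "\<delta> powr (\<alpha>-1) = \<gamma> powr (\<alpha>-1) * (-\<theta>)"
      unfolding \<delta>_def using a by (simp add: powr_mult powr_powr)
    have "\<delta> powr (\<alpha>-1) < (z - \<gamma>) powr (\<alpha>-1)"
      using z a by (intro powr_less_mono2_neg) auto
    moreover have "z powr (\<alpha>-1) < \<gamma> powr (\<alpha>-1)"
      using z a by (intro powr_less_mono2_neg) auto
    then have "(-\<theta>) * z powr (\<alpha>-1) < (-\<theta>) * \<gamma> powr (\<alpha>-1)"
      using a by (intro mult_strict_left_mono) auto
    ultimately have "(z - \<gamma>) powr (\<alpha>-1) + \<theta> * z powr (\<alpha>-1) > 0"
      using dp by (simp add: algebra_simps)
    then have "\<alpha> * ((z - \<gamma>) powr (\<alpha>-1) + \<theta> * z powr (\<alpha>-1)) > 0" using a by simp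
    then have "l > 0" using \<open>l = D z\<close> unfolding D_def by (simp add: algebra_simps)
    then have "\<delta> * l > 0" using d0 by simp
    then have "f (\<gamma>+\<delta>) > f \<gamma>" using z by simp
    then show False using ymax[of "\<gamma>+\<delta>"] yg d0 a by simp
  qed
  ultimately have yg: "\<gamma> < y" by simp
  define D where "D = (\<lambda>s. \<alpha>*(s-\<gamma>) powr (\<alpha>-1) + \<theta>*\<alpha>* s powr (\<alpha>-1))"
  have der: "(f has_real_derivative D y) (at y)"
    unfolding f_def D_def using a yg by (intro D2) auto
  have "D y = 0"
  proof (rule DERIV_local_max[OF der, of "y - \<gamma>"])
    show "0 < y - \<gamma>" using yg by simp
    show "\<forall>u. \<bar>y - u\<bar> < y - \<gamma> \<longrightarrow> f u \<le> f y" using ymax a by auto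
  qed
  then have "\<alpha> * ((y-\<gamma>) powr (\<alpha>-1) + \<theta> * y powr (\<alpha>-1)) = 0" unfolding D_def by (simp add: algebra_simps)
  then have "(y-\<gamma>) powr (\<alpha>-1) + \<theta> * y powr (\<alpha>-1) = 0" using a by simp
  then show ?thesis using yg by simp
qed

lemma crit_unique:
  fixes \<alpha> \<gamma> \<theta> y1 y2 :: real
  assumes a: "\<alpha> < 1" "0 < \<gamma>" "\<gamma> < y1" "\<gamma> < y2"
    and e1: "(y1 - \<gamma>) powr (\<alpha>-1) = - \<theta> * y1 powr (\<alpha>-1)"
    and e2: "(y2 - \<gamma>) powr (\<alpha>-1) = - \<theta> * y2 powr (\<alpha>-1)"
  shows "y1 = y2"
proof -
  have r: "((y - \<gamma>) / y) powr (\<alpha>-1) = - \<theta>"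
    if "\<gamma> < y" "(y - \<gamma>) powr (\<alpha>-1) = - \<theta> * y powr (\<alpha>-1)" for y
    using that a by (simp add: powr_divide)
  have mono: "(y - \<gamma>) / y < (y' - \<gamma>) / y'" if "\<gamma> < y" "y < y'" for y y'
  proof -
    have "\<gamma> / y' < \<gamma> / y" using that a by (intro divide_strict_left_mono) auto
    then show ?thesis using that a by (simp add: diff_divide_distrib)
  qed
  show ?thesis
  proof (rule ccontr)
    assume "y1 \<noteq> y2"
    then consider "y1 < y2" | "y2 < y1" by linarith
    then show False
    proof cases
      case 1
      have "((y2 - \<gamma>) / y2) powr (\<alpha>-1) < ((y1 - \<gamma>) / y1) powr (\<alpha>-1)"
        using mono[OF a(3) 1] a by (intro powr_less_mono2_neg) auto
      then show False using r[OF a(3) e1] r[OF a(4) e2] by simp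
    next
      case 2
      have "((y1 - \<gamma>) / y1) powr (\<alpha>-1) < ((y2 - \<gamma>) / y2) powr (\<alpha>-1)"
        using mono[OF a(4) 2] a by (intro powr_less_mono2_neg) auto
      then show False using r[OF a(3) e1] r[OF a(4) e2] by simp
    qed
  qed
qed



lemma zero_case:
  fixes \<alpha> k \<gamma> \<theta> y :: real
  assumes a: "0 < \<alpha>" "\<alpha> < 1" "0 \<le> k" "0 < \<gamma>" "\<theta> \<noteq> lower_theta \<alpha> k"
    and S0: "0 \<in> Amax (Fobj \<alpha> k \<gamma> \<theta>) 0" and yS: "y \<in> Amax (Fobj \<alpha> k \<gamma> \<theta>) 0"
  shows "y = 0"
proof (rule ccontr)
  assume "y \<noteq> 0"
  then have y0: "y > 0" using yS unfolding Amax_def by auto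
  define tl where "tl = lower_theta \<alpha> k"
  have max0: "\<And>u. 0 \<le> u \<Longrightarrow> Fobj \<alpha> k \<gamma> \<theta> u \<le> Fobj \<alpha> k \<gamma> \<theta> 0"
    using S0 unfolding Amax_def by auto
  consider "\<theta> < tl" | "tl < \<theta>" using a tl_def by linarith
  then show False
  proof cases
    case 1
    have "Fobj \<alpha> k \<gamma> \<theta> y = Fobj \<alpha> k \<gamma> tl y + (\<theta> - tl) * y powr \<alpha>" by (rule F_theta)
    moreover have "(\<theta> - tl) * y powr \<alpha> < 0" using 1 y0 by (simp add: mult_neg_pos)
    moreover have "Fobj \<alpha> k \<gamma> tl y \<le> - (k * \<gamma> powr \<alpha>)" unfolding tl_def using LT_le_all a y0 by simp
    ultimately have "Fobj \<alpha> k \<gamma> \<theta> y < Fobj \<alpha> k \<gamma> \<theta> 0" using F_at0[of \<alpha> \<gamma> k \<theta>] a by linarith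
    moreover have "Fobj \<alpha> k \<gamma> \<theta> 0 \<le> Fobj \<alpha> k \<gamma> \<theta> y" using yS unfolding Amax_def by auto
    ultimately show False by simp
  next
    case 2
    show False
    proof (cases "k = 0")
      case False
      then have k0: "k > 0" using a by simp
      define ys where "ys = \<gamma> * (1 + k powr (- 1 / (1 - \<alpha>)))"
      have "0 \<le> k powr (- 1 / (1 - \<alpha>))" by simp
      then have "0 < 1 + k powr (- 1 / (1 - \<alpha>))" by linarith
      then have ys0: "ys > 0" unfolding ys_def using a by simp
      have "Fobj \<alpha> k \<gamma> \<theta> ys = Fobj \<alpha> k \<gamma> tl ys + (\<theta> - tl) * ys powr \<alpha>" by (rule F_theta)
      moreover have "(\<theta> - tl) * ys powr \<alpha> > 0" using 2 ys0 by simp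
      moreover have "Fobj \<alpha> k \<gamma> tl ys = - (k * \<gamma> powr \<alpha>)" unfolding tl_def ys_def using F_ystar a k0 by simp
      ultimately have "Fobj \<alpha> k \<gamma> \<theta> ys > Fobj \<alpha> k \<gamma> \<theta> 0" using F_at0[of \<alpha> \<gamma> k \<theta>] a by linarith
      then show False using max0[of ys] ys0 by simp
    next
      case True
      have tl1: "tl = -1" unfolding tl_def lower_theta_def using True a by simp
      have th: "0 < 1 + \<theta>" using 2 tl1 by simp
      define C where "C = \<gamma> powr \<alpha> * max 1 (2 / (1 + \<theta>))"
      define u where "u = C powr (1/\<alpha>)"
      have gp: "\<gamma> powr \<alpha> > 0" using a by simp
      have C1: "C \<ge> \<gamma> powr \<alpha>" unfolding C_def using gp by simp
      have C2: "C \<ge> \<gamma> powr \<alpha> * (2 / (1 + \<theta>))" unfolding C_def using gp by (intro mult_left_mono) auto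
      have C0: "C > 0" using C1 gp by linarith
      have uC: "u powr \<alpha> = C" unfolding u_def using C0 a by (simp add: powr_powr)
      have "u \<ge> (\<gamma> powr \<alpha>) powr (1/\<alpha>)" unfolding u_def using C1 a by (intro powr_mono2) auto
      then have ug: "u \<ge> \<gamma>" using a by (simp add: powr_powr)
      have sub: "u powr \<alpha> \<le> (u - \<gamma>) powr \<alpha> + \<gamma> powr \<alpha>"
        using subadd_powr[of \<alpha> "u - \<gamma>" \<gamma>] a ug by simp
      have Fu: "Fobj \<alpha> k \<gamma> \<theta> u = (u - \<gamma>) powr \<alpha> + \<theta> * u powr \<alpha>"
        using ug by (simp add: Fobj_def U_def)
      have "(1 + \<theta>) * C \<ge> (1 + \<theta>) * (\<gamma> powr \<alpha> * (2 / (1 + \<theta>)))" using C2 th by (intro mult_left_mono) auto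
      also have "(1 + \<theta>) * (\<gamma> powr \<alpha> * (2 / (1 + \<theta>))) = 2 * \<gamma> powr \<alpha>" using th by (simp add: field_simps)
      finally have "(1 + \<theta>) * C \<ge> 2 * \<gamma> powr \<alpha>" .
      moreover have "(1 + \<theta>) * C = C + \<theta> * C" by (simp add: algebra_simps)
      moreover have "\<theta> * u powr \<alpha> = \<theta> * C" using uC by simp
      ultimately have "Fobj \<alpha> k \<gamma> \<theta> u > 0" unfolding Fu using sub uC gp by linarith
      moreover have "Fobj \<alpha> k \<gamma> \<theta> 0 = 0" using F_at0[of \<alpha> \<gamma> k \<theta>] a True by simp
      ultimately show False using max0[of u] ug a by simp
    qed
  qed
qed

lemma argmax_unique:
  fixes \<alpha> k \<gamma> \<theta> y1 y2 :: real
  assumes a: "0 < \<alpha>" "\<alpha> < 1" "0 \<le> k" "0 < \<gamma>" "\<theta> \<noteq> lower_theta \<alpha> k"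
    and y1: "y1 \<in> Amax (Fobj \<alpha> k \<gamma> \<theta>) 0" and y2: "y2 \<in> Amax (Fobj \<alpha> k \<gamma> \<theta>) 0"
  shows "y1 = y2"
proof (cases "\<theta> < 0")
  case False
  then show ?thesis using S_empty_nonneg[of \<alpha> k \<gamma> \<theta> y1] a y1 by simp
next
  case True
  show ?thesis
  proof (cases "y1 = 0 \<or> y2 = 0")
    case True
    then show ?thesis using zero_case[OF a, of y1] zero_case[OF a, of y2] y1 y2 by auto
  next
    case False
    then have p: "y1 > 0" "y2 > 0" using y1 y2 unfolding Amax_def by auto
    note c1 = crit[OF a(1-4) True y1 p(1)] and c2 = crit[OF a(1-4) True y2 p(2)]
    show ?thesis using crit_unique[of \<alpha> \<gamma> y1 y2 \<theta>] c1 c2 a by simp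
  qed
qed



definition Bad :: "(real \<Rightarrow> real) \<Rightarrow> real set" where
  "Bad f = {z. 0 < z \<and> (\<exists>y1 y2. y1 \<in> Amax f z \<and> y2 \<in> Amax f z \<and> y1 < y2)}"

definition yh :: "(real \<Rightarrow> real) \<Rightarrow> real \<Rightarrow> real" where
  "yh f z = (if 0 < z then (SOME y. y \<in> Amax f z) else 0)"

definition Kb :: "(real \<Rightarrow> real) \<Rightarrow> real \<Rightarrow> real \<Rightarrow> real \<Rightarrow> real \<Rightarrow> real" where
  "Kb f \<alpha> a0 b z = 2 * (a0 - f 0) + 2 * (b powr (1/(1-\<alpha>)) * (z/2) powr (-\<alpha>/(1-\<alpha>)))"

lemma Amax_mono:
  assumes "z1 < z2" "y1 \<in> Amax f z1" "y2 \<in> Amax f z2"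
  shows "y2 \<le> y1"
proof -
  have 1: "f y2 - z1*y2 \<le> f y1 - z1*y1" using assms unfolding Amax_def by auto
  have 2: "f y1 - z2*y1 \<le> f y2 - z2*y2" using assms unfolding Amax_def by auto
  have "(z2 - z1) * (y1 - y2) \<ge> 0" using 1 2 by (simp add: algebra_simps)
  then show ?thesis using assms(1) by (simp add: zero_le_mult_iff)
qed

lemma Amax_closed:
  assumes cont: "continuous_on {0..} f"
    and ys: "\<And>n. ys n \<in> Amax f (zs n)" and yl: "ys \<longlonglongrightarrow> y" and zl: "zs \<longlonglongrightarrow> z"
  shows "y \<in> Amax f z"
proof -
  have y0: "0 \<le> y" using ys yl unfolding Amax_def by (auto intro: LIMSEQ_le_const)
  have fy: "(\<lambda>n. f (ys n)) \<longlonglongrightarrow> f y"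
    using continuous_on_tendsto_compose[OF cont yl] y0 ys unfolding Amax_def by auto
  have "f u - z*u \<le> f y - z*y" if u: "0 \<le> u" for u
  proof -
    have "(\<lambda>n. f u - zs n * u) \<longlonglongrightarrow> f u - z * u" by (intro tendsto_intros zl)
    moreover have "(\<lambda>n. f (ys n) - zs n * ys n) \<longlonglongrightarrow> f y - z * y" by (intro tendsto_intros fy zl yl)
    moreover have "\<And>n. f u - zs n * u \<le> f (ys n) - zs n * ys n" using ys u unfolding Amax_def by auto
    ultimately show ?thesis using LIMSEQ_le by blast
  qed
  then show ?thesis using y0 unfolding Amax_def by auto
qed

lemma Bad_countable:
  shows "countable (Bad f)"
proof -
  define q where "q z = (SOME r. r \<in> \<rat> \<and> (\<exists>y1 y2. y1 \<in> Amax f z \<and> y2 \<in> Amax f z \<and> y1 < r \<and> r < y2))" for z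
  have qz: "q z \<in> \<rat> \<and> (\<exists>y1 y2. y1 \<in> Amax f z \<and> y2 \<in> Amax f z \<and> y1 < q z \<and> q z < y2)"
    if "z \<in> Bad f" for z
  proof -
    have "z \<in> {z. 0 < z \<and> (\<exists>y1 y2. y1 \<in> Amax f z \<and> y2 \<in> Amax f z \<and> y1 < y2)}"
      using that by (simp only: Bad_def)
    then obtain y1 y2 where y: "y1 \<in> Amax f z" "y2 \<in> Amax f z" "y1 < y2" by blast
    obtain r where "r \<in> \<rat>" "y1 < r" "r < y2" using Rats_dense_in_real[OF y(3)] by auto
    then have "\<exists>r. r \<in> \<rat> \<and> (\<exists>y1 y2. y1 \<in> Amax f z \<and> y2 \<in> Amax f z \<and> y1 < r \<and> r < y2)"
      using y by blast
    then show ?thesis unfolding q_def by (rule someI_ex)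
  qed
  have lt: "q z2 < q z1" if zz: "z1 \<in> Bad f" "z2 \<in> Bad f" "z1 < z2" for z1 z2
  proof -
    obtain a1 b1 where 1: "a1 \<in> Amax f z1" "b1 \<in> Amax f z1" "a1 < q z1" "q z1 < b1" using qz[OF zz(1)] by auto
    obtain a2 b2 where 2: "a2 \<in> Amax f z2" "b2 \<in> Amax f z2" "a2 < q z2" "q z2 < b2" using qz[OF zz(2)] by auto
    have "b2 \<le> a1" using Amax_mono[OF zz(3) 1(1) 2(2)] .
    then show ?thesis using 1 2 by linarith
  qed
  have "inj_on q (Bad f)"
  proof (rule inj_onI)
    fix z1 z2 assume a: "z1 \<in> Bad f" "z2 \<in> Bad f" "q z1 = q z2"
    show "z1 = z2"
    proof (rule ccontr)
      assume "z1 \<noteq> z2"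
      then consider "z1 < z2" | "z2 < z1" by linarith
      then show False using lt a by cases fastforce+
    qed
  qed
  moreover have "countable (q ` Bad f)"
    using qz by (intro countable_subset[OF _ countable_rat]) auto
  ultimately show ?thesis using countable_image_inj_on by blast
qed

context
  fixes f :: "real \<Rightarrow> real" and \<alpha> a0 b :: real
  assumes cont: "continuous_on {0..} f"
    and al: "0 < \<alpha>" "\<alpha> < 1" and b0: "0 \<le> b"
    and grow: "\<And>y. 0 \<le> y \<Longrightarrow> f y \<le> b * y powr \<alpha> + a0"
begin

lemma f0_le: "f 0 \<le> a0" using grow[of 0] al by simp

lemma Amax_bound:
  assumes z: "0 < z" and y: "y \<in> Amax f z"
  shows "z * y \<le> Kb f \<alpha> a0 b z"
proof -
  define C where "C = b powr (1/(1-\<alpha>)) * (z/2) powr (-\<alpha>/(1-\<alpha>))"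
  have y0: "0 \<le> y" using y unfolding Amax_def by auto
  have "f 0 - z*0 \<le> f y - z*y" using y unfolding Amax_def by auto
  moreover have "b * y powr \<alpha> \<le> (z/2) * y + C" unfolding C_def using absorb[of \<alpha> b "z/2" y] al b0 z y0 by simp
  moreover have "f y \<le> b * y powr \<alpha> + a0" using grow y0 .
  ultimately have "(z/2) * y \<le> a0 - f 0 + C" by simp
  then show ?thesis unfolding Kb_def C_def by simp
qed

lemma Amax_nonempty:
  assumes z: "0 < z"
  shows "\<exists>y. y \<in> Amax f z"
proof -
  define C where "C = b powr (1/(1-\<alpha>)) * (z/2) powr (-\<alpha>/(1-\<alpha>))"
  define R where "R = 2 * (a0 - f 0 + C) / z + 1"
  have C0: "C \<ge> 0" unfolding C_def by simp
  have "0 \<le> 2 * (a0 - f 0 + C) / z" using C0 f0_le z by simp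
  then have R0: "R > 0" unfolding R_def by linarith
  have "continuous_on {0..R} (\<lambda>u. f u - z * u)"
    using continuous_on_subset[OF cont] by (intro continuous_intros) auto
  then obtain y where y: "y \<in> {0..R}" "\<And>u. u \<in> {0..R} \<Longrightarrow> f u - z*u \<le> f y - z*y"
    using continuous_attains_sup[of "{0..R}" "\<lambda>u. f u - z * u"] R0 by auto
  have "f u - z*u \<le> f y - z*y" if u: "0 \<le> u" for u
  proof (cases "u \<le> R")
    case True then show ?thesis using y u by auto
  next
    case False
    have "b * u powr \<alpha> \<le> (z/2) * u + C" unfolding C_def using absorb[of \<alpha> b "z/2" u] al b0 z u by simp
    then have "f u - z*u \<le> a0 + C - (z/2) * u" using grow[OF u] by simp
    also have "(z/2) * u \<ge> (z/2) * R" using False z by simp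
    then have "a0 + C - (z/2) * u \<le> a0 + C - (z/2) * R" by simp
    also have "(z/2) * R = a0 - f 0 + C + z/2" unfolding R_def using z by (simp add: field_simps)
    finally have "f u - z*u < f 0" using z by simp
    also have "f 0 = f 0 - z * 0" by simp
    also have "\<dots> \<le> f y - z*y" using y(2)[of 0] R0 by simp
    finally show ?thesis by simp
  qed
  then show ?thesis using y unfolding Amax_def by auto
qed

lemma yh_in:
  assumes "0 < z" shows "yh f z \<in> Amax f z"
proof -
  have "(SOME y. y \<in> Amax f z) \<in> Amax f z" using Amax_nonempty[OF assms] by (rule someI_ex)
  then show ?thesis unfolding yh_def using assms by simp
qed

lemma yh_nonneg: "0 \<le> yh f z"
  using yh_in[of z] unfolding yh_def Amax_def by (cases "0 < z") auto

lemma yh_anti: "0 < z1 \<Longrightarrow> z1 \<le> z2 \<Longrightarrow> yh f z2 \<le> yh f z1"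
  using Amax_mono[of z1 z2 "yh f z1" f "yh f z2"] yh_in[of z1] yh_in[of z2]
  by (cases "z1 = z2") auto

lemma yh_bound: "0 < z \<Longrightarrow> z * yh f z \<le> Kb f \<alpha> a0 b z"
  using Amax_bound yh_in by blast

lemma yh_measurable: "yh f \<in> borel_measurable borel"
proof -
  have "(\<lambda>z. - yh f z) \<in> borel_measurable borel"
  proof (rule borel_measurable_piecewise_mono[of "{{..0}, {0<..}}"])
    show "countable {{..0::real}, {0<..}}" by simp
    show "\<And>c. c \<in> {{..0::real}, {0<..}} \<Longrightarrow> c \<in> sets borel" by auto
    show "\<Union>{{..0::real}, {0<..}} = UNIV" by auto
    fix c assume "c \<in> {{..0::real}, {0<..}}"
    then show "mono_on c (\<lambda>z. - yh f z)"
    proof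
      assume "c = {..0}"
      then show ?thesis unfolding yh_def by (auto intro!: mono_onI)
    next
      assume "c \<in> {{0<..}}"
      then show ?thesis using yh_anti by (auto intro!: mono_onI)
    qed
  qed
  then have "(\<lambda>z. - (- yh f z)) \<in> borel_measurable borel" by measurable
  then show ?thesis by simp
qed

lemma yh_cont:
  assumes z: "0 < z" and nb: "z \<notin> Bad f"
  shows "isCont (yh f) z"
proof -
  have notwo: "y1 = y2" if "y1 \<in> Amax f z" "y2 \<in> Amax f z" for y1 y2
  proof (rule ccontr)
    assume "y1 \<noteq> y2"
    then consider "y1 < y2" | "y2 < y1" by linarith
    then have "z \<in> Bad f" using that z unfolding Bad_def by cases blast+
    then show False using nb by simp
  qed
  have right: "\<exists>d>0. yh f z - e < yh f (z + d)" if e: "e > 0" for e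
  proof (rule ccontr)
    assume "\<not> ?thesis"
    then have le: "\<And>d. d > 0 \<Longrightarrow> yh f (z + d) \<le> yh f z - e" by force
    define w where "w n = z + 1 / (real n + 1)" for n
    define Y where "Y n = yh f (w n)" for n
    have w0: "w n > 0" for n unfolding w_def using z by (simp add: add_pos_pos)
    have inc: "incseq Y"
    proof (rule incseq_SucI)
      fix n
      have "w (Suc n) \<le> w n" unfolding w_def by (simp add: frac_le)
      then show "Y n \<le> Y (Suc n)" unfolding Y_def using yh_anti w0 by blast
    qed
    have Yle: "Y n \<le> yh f z - e" for n unfolding Y_def w_def by (rule le) simp
    have bdd: "bdd_above (range Y)" using Yle by (intro bdd_aboveI2) auto
    have lim: "Y \<longlonglongrightarrow> (SUP i. Y i)" by (rule LIMSEQ_incseq_SUP[OF bdd inc])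
    have "(\<lambda>n. 1 / (real n + 1)) \<longlonglongrightarrow> 0"
      using LIMSEQ_inverse_real_of_nat by (simp add: inverse_eq_divide add.commute)
    then have wl: "w \<longlonglongrightarrow> z"
      unfolding w_def using tendsto_add[OF tendsto_const, of "\<lambda>n. 1 / (real n + 1)" 0 sequentially z] by simp
    have "(SUP i. Y i) \<in> Amax f z"
      by (rule Amax_closed[OF cont _ lim wl]) (simp add: Y_def yh_in w0)
    moreover have "(SUP i. Y i) \<le> yh f z - e" using Yle by (intro cSUP_least) auto
    ultimately show False using notwo[of "SUP i. Y i" "yh f z"] yh_in[OF z] e by simp
  qed
  have left: "\<exists>d>0. d < z \<and> yh f (z - d) < yh f z + e" if e: "e > 0" for e
  proof (rule ccontr)
    assume "\<not> ?thesis"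
    then have ge: "\<And>d. d > 0 \<Longrightarrow> d < z \<Longrightarrow> yh f z + e \<le> yh f (z - d)" by force
    define w where "w n = z - z / (real n + 2)" for n
    define Y where "Y n = yh f (w n)" for n
    have dpos: "z / (real n + 2) > 0" "z / (real n + 2) < z" for n
    proof -
      show "z / (real n + 2) > 0" using z by simp
      have "z / (real n + 2) < z / 1" using z by (intro divide_strict_left_mono) auto
      then show "z / (real n + 2) < z" by simp
    qed
    have w0: "w n > 0" for n unfolding w_def using dpos[of n] by simp
    have dec: "decseq Y"
    proof (rule decseq_SucI)
      fix n
      have "z / (real (Suc n) + 2) \<le> z / (real n + 2)" using z by (intro divide_left_mono) auto
      then have "w n \<le> w (Suc n)" unfolding w_def by simp
      then show "Y (Suc n) \<le> Y n" unfolding Y_def using yh_anti w0 by blast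
    qed
    have Yge: "yh f z + e \<le> Y n" for n unfolding Y_def w_def using dpos[of n] by (intro ge) auto
    have bdd: "bdd_below (range Y)" using Yge by (intro bdd_belowI2) auto
    have lim: "Y \<longlonglongrightarrow> (INF i. Y i)" by (rule LIMSEQ_decseq_INF[OF bdd dec])
    have "(\<lambda>n. z / (real n + 2)) \<longlonglongrightarrow> 0"
    proof -
      have "(\<lambda>n. inverse (real (Suc (Suc n)))) \<longlonglongrightarrow> 0"
        by (rule LIMSEQ_Suc[OF LIMSEQ_inverse_real_of_nat])
      then have "(\<lambda>n. z * inverse (real (Suc (Suc n)))) \<longlonglongrightarrow> z * 0"
        by (intro tendsto_mult tendsto_const)
      moreover have "\<And>n. z * inverse (real (Suc (Suc n))) = z / (real n + 2)"
        by (simp add: divide_inverse add.commute)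
      ultimately show ?thesis by simp
    qed
    then have wl: "w \<longlonglongrightarrow> z"
      unfolding w_def using tendsto_diff[OF tendsto_const, of "\<lambda>n. z / (real n + 2)" 0 sequentially z] by simp
    have "(INF i. Y i) \<in> Amax f z"
      by (rule Amax_closed[OF cont _ lim wl]) (simp add: Y_def yh_in w0)
    moreover have "yh f z + e \<le> (INF i. Y i)" using Yge by (intro cINF_greatest) auto
    ultimately show False using notwo[of "INF i. Y i" "yh f z"] yh_in[OF z] e by simp
  qed
  show ?thesis
    unfolding isCont_def LIM_eq
  proof (intro allI impI)
    fix e :: real assume e: "e > 0"
    obtain d1 where d1: "d1 > 0" "yh f z - e < yh f (z + d1)" using right[OF e] by auto
    obtain d2 where d2: "d2 > 0" "d2 < z" "yh f (z - d2) < yh f z + e" using left[OF e] by auto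
    show "\<exists>s>0. \<forall>x. x \<noteq> z \<and> norm (x - z) < s \<longrightarrow> norm (yh f x - yh f z) < e"
    proof (intro exI[of _ "min d1 d2"] conjI allI impI)
      show "0 < min d1 d2" using d1 d2 by simp
      fix x assume x: "x \<noteq> z \<and> norm (x - z) < min d1 d2"
      then have x1: "z - d2 < x" "x < z + d1" by auto
      have "yh f (z + d1) \<le> yh f x" using yh_anti[of x "z + d1"] x1 d2 by simp
      moreover have "yh f x \<le> yh f (z - d2)" using yh_anti[of "z - d2" x] x1 d2 by simp
      ultimately show "norm (yh f x - yh f z) < e" using d1 d2 by simp
    qed
  qed
qed

end



lemma ext_expectation_integrable:
  fixes X :: "'a \<Rightarrow> real"
  assumes X: "integrable M X"
  shows "ext_expectation M X = ereal (integral\<^sup>L M X)"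
proof -
  have fin1: "(\<integral>\<^sup>+x. ennreal (X x) \<partial>M) < \<infinity>"
  proof -
    have "(\<integral>\<^sup>+x. ennreal (X x) \<partial>M) \<le> (\<integral>\<^sup>+x. ennreal (norm (X x)) \<partial>M)"
      by (intro nn_integral_mono) auto
    also have "\<dots> < \<infinity>" using X integrable_iff_bounded by blast
    finally show ?thesis .
  qed
  have fin2: "(\<integral>\<^sup>+x. ennreal (- X x) \<partial>M) < \<infinity>"
  proof -
    have "(\<integral>\<^sup>+x. ennreal (- X x) \<partial>M) \<le> (\<integral>\<^sup>+x. ennreal (norm (X x)) \<partial>M)"
      by (intro nn_integral_mono) auto
    also have "\<dots> < \<infinity>" using X integrable_iff_bounded by blast
    finally show ?thesis .
  qed
  have e: "enn2ereal u = ereal (enn2real u)" if "u < \<infinity>" for u :: ennreal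
  proof -
    have "enn2ereal u = enn2ereal (ennreal (enn2real u))" using that by simp
    also have "\<dots> = ereal (enn2real u)" by (simp add: enn2real_nonneg)
    finally show ?thesis .
  qed
  show ?thesis
    unfolding ext_expectation_def real_lebesgue_integral_def[OF X] using e[OF fin1] e[OF fin2] by simp
qed

lemma aug_sub:
  assumes bm: "brownian_motion M B"
  shows "subalgebra M (augmented_filtration M B t)"
proof -
  define G where "G = {B s -` A \<inter> space M | s A. 0 \<le> s \<and> s \<le> t \<and> A \<in> sets borel} \<union> null_sets M"
  have Bm: "\<And>s. B s \<in> borel_measurable M" using bm unfolding brownian_motion_def by auto
  have GM: "G \<subseteq> sets M" unfolding G_def using Bm by (auto simp: null_sets_def)
  then have GP: "G \<subseteq> Pow (space M)" using sets.sets_into_space by blast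
  have "sets (augmented_filtration M B t) = sigma_sets (space M) G"
    unfolding augmented_filtration_def G_def[symmetric] using GP by (simp add: sets_measure_of)
  moreover have "space (augmented_filtration M B t) = space M"
    unfolding augmented_filtration_def G_def[symmetric] using GP by (simp add: space_measure_of)
  moreover have "sigma_sets (space M) G \<subseteq> sets M" using GM sigma_sets_le_sets_iff by blast
  ultimately show ?thesis unfolding subalgebra_def by simp
qed

lemma B_aug_meas:
  assumes bm: "brownian_motion M B" and t: "0 \<le> t"
  shows "B t \<in> borel_measurable (augmented_filtration M B t)"
proof -
  define G where "G = {B s -` A \<inter> space M | s A. 0 \<le> s \<and> s \<le> t \<and> A \<in> sets borel} \<union> null_sets M"
  have Bm: "\<And>s. B s \<in> borel_measurable M" using bm unfolding brownian_motion_def by auto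
  have GM: "G \<subseteq> sets M" unfolding G_def using Bm by (auto simp: null_sets_def)
  then have GP: "G \<subseteq> Pow (space M)" using sets.sets_into_space by blast
  have sp: "space (augmented_filtration M B t) = space M"
    unfolding augmented_filtration_def G_def[symmetric] using GP by (simp add: space_measure_of)
  have st: "sets (augmented_filtration M B t) = sigma_sets (space M) G"
    unfolding augmented_filtration_def G_def[symmetric] using GP by (simp add: sets_measure_of)
  show ?thesis
  proof (rule measurableI)
    show "\<And>x. x \<in> space (augmented_filtration M B t) \<Longrightarrow> B t x \<in> space borel" by simp
    fix A :: "real set" assume A: "A \<in> sets borel"
    have "B t -` A \<inter> space M \<in> G" unfolding G_def using A t by blast
    then show "B t -` A \<inter> space (augmented_filtration M B t) \<in> sets (augmented_filtration M B t)"
      unfolding sp st by (rule sigma_sets.Basic)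
  qed
qed

lemma normal_exp_identity:
  fixes s a x :: real
  assumes "0 < s"
  shows "normal_density 0 s x * exp (a * x) = exp (a^2 * s^2 / 2) * normal_density (a * s^2) s x"
proof -
  have "- (x - 0)\<^sup>2 / (2 * s\<^sup>2) + a * x = a^2 * s^2 / 2 + (- (x - a * s^2)\<^sup>2 / (2 * s\<^sup>2))"
    using assms by (simp add: field_simps power2_eq_square)
  then have "exp (- (x - 0)\<^sup>2 / (2 * s\<^sup>2)) * exp (a * x) = exp (a^2 * s^2 / 2) * exp (- (x - a * s^2)\<^sup>2 / (2 * s\<^sup>2))"
    by (simp flip: exp_add)
  then show ?thesis unfolding normal_density_def by simp
qed



context
  fixes M :: "'a measure" and B :: "real \<Rightarrow> 'a \<Rightarrow> real" and \<mu> r \<sigma> \<tau> :: real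
  assumes bm: "brownian_motion M B" and sig: "\<sigma> > 0" and phi: "mpr \<mu> r \<sigma> \<noteq> 0" and tau: "\<tau> > 0"
begin

lemma ps: "prob_space M" using bm unfolding brownian_motion_def by simp

lemma Bm[measurable]: "B t \<in> borel_measurable M" using bm unfolding brownian_motion_def by simp

lemma distB: "distributed M lborel (\<lambda>\<omega>. B \<tau> \<omega> - B 0 \<omega>) (normal_density 0 (sqrt \<tau>))"
  using bm tau unfolding brownian_motion_def by force

lemma B0: "AE \<omega> in M. B 0 \<omega> = 0" using bm unfolding brownian_motion_def by simp

lemma null_BM:
  assumes C: "countable C"
  shows "AE \<omega> in M. B \<tau> \<omega> \<notin> C"
proof -
  have Cn: "C \<in> null_sets lborel" using C by (rule countable_imp_null_set_lborel)
  then have Cs: "C \<in> sets lborel" by auto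
  have "emeasure M ((\<lambda>\<omega>. B \<tau> \<omega> - B 0 \<omega>) -` C \<inter> space M) = (\<integral>\<^sup>+x. ennreal (normal_density 0 (sqrt \<tau>) x) * indicator C x \<partial>lborel)"
    using distributed_emeasure[OF distB Cs] by simp
  also have "\<dots> = 0"
  proof -
    have "AE x in lborel. x \<notin> C" using Cn AE_not_in by blast
    then have "AE x in lborel. ennreal (normal_density 0 (sqrt \<tau>) x) * indicator C x = 0"
      by eventually_elim simp
    moreover have meas: "(\<lambda>x. ennreal (normal_density 0 (sqrt \<tau>) x) * indicator C x) \<in> borel_measurable lborel"
      using Cs by measurable
    ultimately show ?thesis using nn_integral_0_iff_AE[OF meas] by simp
  qed
  finally have em: "emeasure M ((\<lambda>\<omega>. B \<tau> \<omega> - B 0 \<omega>) -` C \<inter> space M) = 0" .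
  have ms: "(\<lambda>\<omega>. B \<tau> \<omega> - B 0 \<omega>) -` C \<inter> space M \<in> sets M"
    using Cs by measurable
  have se: "{\<omega> \<in> space M. \<not> (B \<tau> \<omega> - B 0 \<omega> \<notin> C)} = (\<lambda>\<omega>. B \<tau> \<omega> - B 0 \<omega>) -` C \<inter> space M"
    by auto
  have "AE \<omega> in M. B \<tau> \<omega> - B 0 \<omega> \<notin> C"
    using AE_iff_measurable[OF ms se] em by simp
  then show ?thesis using B0 by eventually_elim simp
qed

lemma exp_int: "integrable M (\<lambda>\<omega>. exp (a * B \<tau> \<omega>))"
proof -
  have s0: "sqrt \<tau> > 0" using tau by simp
  have "integrable lborel (\<lambda>x. normal_density 0 (sqrt \<tau>) x * exp (a * x))"
    unfolding normal_exp_identity[OF s0]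
    using integrable_normal_density[OF s0] by simp
  then have "integrable M (\<lambda>\<omega>. exp (a * (B \<tau> \<omega> - B 0 \<omega>)))"
    using distributed_integrable[OF distB, of "\<lambda>x. exp (a * x)"] by simp
  then show ?thesis
    by (rule integrable_cong_AE[THEN iffD1, rotated -1]) (use B0 in auto)
qed

lemma Z_def2: "pricing_kernel \<mu> r \<sigma> B \<tau> \<omega> = exp (- mpr \<mu> r \<sigma> * B \<tau> \<omega> - (r + (mpr \<mu> r \<sigma>)\<^sup>2 / 2) * \<tau>)"
  unfolding pricing_kernel_def ..

lemma Z_pos: "0 < pricing_kernel \<mu> r \<sigma> B \<tau> \<omega>" unfolding Z_def2 by simp

lemma Z_meas_aug: "(\<lambda>\<omega>. pricing_kernel \<mu> r \<sigma> B \<tau> \<omega>) \<in> borel_measurable (augmented_filtration M B \<tau>)"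
proof -
  have [measurable]: "B \<tau> \<in> borel_measurable (augmented_filtration M B \<tau>)" using B_aug_meas[OF bm] tau by simp
  show ?thesis unfolding Z_def2 by measurable
qed

lemma aug_to_M: "X \<in> borel_measurable (augmented_filtration M B \<tau>) \<Longrightarrow> X \<in> borel_measurable M"
  using measurable_from_subalg[OF aug_sub[OF bm]] by blast

lemma Z_meas[measurable]: "(\<lambda>\<omega>. pricing_kernel \<mu> r \<sigma> B \<tau> \<omega>) \<in> borel_measurable M"
  using aug_to_M[OF Z_meas_aug] .

lemma Z_powr_int: "integrable M (\<lambda>\<omega>. pricing_kernel \<mu> r \<sigma> B \<tau> \<omega> powr q)"
proof -
  define c where "c = (r + (mpr \<mu> r \<sigma>)\<^sup>2 / 2) * \<tau>"
  have e: "pricing_kernel \<mu> r \<sigma> B \<tau> \<omega> powr q = exp (- q * c) * exp ((- q * mpr \<mu> r \<sigma>) * B \<tau> \<omega>)" for \<omega>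
    unfolding Z_def2 c_def[symmetric] powr_def by (simp add: algebra_simps flip: exp_add)
  show ?thesis unfolding e by (intro integrable_mult_right exp_int)
qed

lemma Z_int: "integrable M (\<lambda>\<omega>. pricing_kernel \<mu> r \<sigma> B \<tau> \<omega>)"
  using Z_powr_int[of 1] Z_pos by (simp add: less_imp_le)

lemma Z_null:
  assumes c: "0 < c" and C: "countable C"
  shows "AE \<omega> in M. c * pricing_kernel \<mu> r \<sigma> B \<tau> \<omega> \<notin> C"
proof -
  define k0 where "k0 = (r + (mpr \<mu> r \<sigma>)\<^sup>2 / 2) * \<tau>"
  define h where "h b = c * exp (- mpr \<mu> r \<sigma> * b - k0)" for b
  define D where "D = {b. h b \<in> C}"
  have "inj_on h D"
  proof (rule inj_onI)
    fix x y assume "h x = h y"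
    then have "- mpr \<mu> r \<sigma> * x - k0 = - mpr \<mu> r \<sigma> * y - k0" unfolding h_def using c by simp
    then show "x = y" using phi by simp
  qed
  moreover have "countable (h ` D)" unfolding D_def by (rule countable_subset[OF _ C]) auto
  ultimately have "countable D" using countable_image_inj_on by blast
  then have "AE \<omega> in M. B \<tau> \<omega> \<notin> D" by (rule null_BM)
  then show ?thesis
    by eventually_elim (simp add: D_def h_def k0_def Z_def2)
qed

lemma EZ_pos: "0 < (\<integral>\<omega>. pricing_kernel \<mu> r \<sigma> B \<tau> \<omega> \<partial>M)"
proof -
  interpret prob_space M by (rule ps)
  have nn: "AE \<omega> in M. 0 \<le> pricing_kernel \<mu> r \<sigma> B \<tau> \<omega>" using Z_pos by (simp add: less_imp_le)
  have "0 \<le> (\<integral>\<omega>. pricing_kernel \<mu> r \<sigma> B \<tau> \<omega> \<partial>M)" using nn by (rule integral_nonneg_AE)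
  moreover have "(\<integral>\<omega>. pricing_kernel \<mu> r \<sigma> B \<tau> \<omega> \<partial>M) \<noteq> 0"
  proof
    assume "(\<integral>\<omega>. pricing_kernel \<mu> r \<sigma> B \<tau> \<omega> \<partial>M) = 0"
    then have "AE \<omega> in M. pricing_kernel \<mu> r \<sigma> B \<tau> \<omega> = 0"
      using integral_nonneg_eq_0_iff_AE[OF Z_int nn] by simp
    then have "AE \<omega> in M. False" using Z_pos by (simp add: less_le)
    then show False by simp
  qed
  ultimately show ?thesis by simp
qed

lemma adm_D:
  assumes "Y \<in> admissible M B \<mu> r \<sigma> \<tau>"
  shows "Y \<in> borel_measurable M" "\<And>\<omega>. \<omega> \<in> space M \<Longrightarrow> 0 \<le> Y \<omega>"
    "(\<integral>\<^sup>+\<omega>. ennreal (pricing_kernel \<mu> r \<sigma> B \<tau> \<omega> * Y \<omega>) \<partial>M) \<le> 1"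
  using assms aug_to_M unfolding admissible_def by auto

lemma adm_ZY:
  assumes Y: "Y \<in> admissible M B \<mu> r \<sigma> \<tau>"
  shows "integrable M (\<lambda>\<omega>. pricing_kernel \<mu> r \<sigma> B \<tau> \<omega> * Y \<omega>)"
    "(\<integral>\<omega>. pricing_kernel \<mu> r \<sigma> B \<tau> \<omega> * Y \<omega> \<partial>M) \<le> 1"
proof -
  note D = adm_D[OF Y]
  have [measurable]: "Y \<in> borel_measurable M" by (rule D(1))
  have nn: "AE \<omega> in M. 0 \<le> pricing_kernel \<mu> r \<sigma> B \<tau> \<omega> * Y \<omega>"
  proof (rule AE_I2)
    fix \<omega> assume "\<omega> \<in> space M"
    then show "0 \<le> pricing_kernel \<mu> r \<sigma> B \<tau> \<omega> * Y \<omega>"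
      using D(2) Z_pos[of \<omega>] by simp
  qed
  have "(\<integral>\<^sup>+\<omega>. ennreal (pricing_kernel \<mu> r \<sigma> B \<tau> \<omega> * Y \<omega>) \<partial>M) < \<infinity>"
    using D(3) by (simp add: le_less_trans)
  then show int: "integrable M (\<lambda>\<omega>. pricing_kernel \<mu> r \<sigma> B \<tau> \<omega> * Y \<omega>)"
    using nn by (intro integrableI_nonneg) auto
  have "ennreal (\<integral>\<omega>. pricing_kernel \<mu> r \<sigma> B \<tau> \<omega> * Y \<omega> \<partial>M) \<le> 1"
    using D(3) nn_integral_eq_integral[OF int nn] by simp
  then show "(\<integral>\<omega>. pricing_kernel \<mu> r \<sigma> B \<tau> \<omega> * Y \<omega> \<partial>M) \<le> 1"
    by (simp add: ennreal_le_1)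
qed

lemma adm_powr:
  assumes Y: "Y \<in> admissible M B \<mu> r \<sigma> \<tau>" and al: "0 < \<alpha>" "\<alpha> < 1"
  shows "integrable M (\<lambda>\<omega>. Y \<omega> powr \<alpha>)"
proof -
  note D = adm_D[OF Y]
  have [measurable]: "Y \<in> borel_measurable M" by (rule D(1))
  define p where "p = - \<alpha> / (1 - \<alpha>)"
  let ?Z = "\<lambda>\<omega>. pricing_kernel \<mu> r \<sigma> B \<tau> \<omega>"
  have g: "integrable M (\<lambda>\<omega>. \<alpha> * (?Z \<omega> * Y \<omega>) + (1-\<alpha>) * ?Z \<omega> powr p)"
    using adm_ZY(1)[OF Y] Z_powr_int[of p] by (intro Bochner_Integration.integrable_add Bochner_Integration.integrable_mult_right) auto
  show ?thesis
  proof (rule Bochner_Integration.integrable_bound[OF g])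
    show "(\<lambda>\<omega>. Y \<omega> powr \<alpha>) \<in> borel_measurable M" by measurable
    show "AE \<omega> in M. norm (Y \<omega> powr \<alpha>) \<le> norm (\<alpha> * (?Z \<omega> * Y \<omega>) + (1-\<alpha>) * ?Z \<omega> powr p)"
    proof (rule AE_I2)
      fix \<omega> assume w: "\<omega> \<in> space M"
      have Z0: "?Z \<omega> > 0" by (rule Z_pos)
      have Y0: "Y \<omega> \<ge> 0" using D(2)[OF w] .
      have "(?Z \<omega> * Y \<omega>) powr \<alpha> * (?Z \<omega> powr p) powr (1-\<alpha>) = Y \<omega> powr \<alpha>"
      proof -
        have "(?Z \<omega> powr p) powr (1-\<alpha>) = ?Z \<omega> powr (-\<alpha>)"
          using al unfolding p_def by (simp add: powr_powr)
        then show ?thesis using Z0 Y0 by (simp add: powr_mult powr_minus field_simps)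
      qed
      moreover have "(?Z \<omega> * Y \<omega>) powr \<alpha> * (?Z \<omega> powr p) powr (1-\<alpha>) \<le> \<alpha> * (?Z \<omega> * Y \<omega>) + (1-\<alpha>) * ?Z \<omega> powr p"
        using young_le[of \<alpha> "?Z \<omega> * Y \<omega>" "?Z \<omega> powr p"] al Z0 Y0 by simp
      moreover have "0 \<le> \<alpha> * (?Z \<omega> * Y \<omega>) + (1-\<alpha>) * ?Z \<omega> powr p" using al Z0 Y0 by simp
      ultimately show "norm (Y \<omega> powr \<alpha>) \<le> norm (\<alpha> * (?Z \<omega> * Y \<omega>) + (1-\<alpha>) * ?Z \<omega> powr p)" by simp
    qed
  qed
qed

lemma Fobj_meas[measurable]: "Fobj \<alpha> k \<gamma> \<theta> \<in> borel_measurable borel"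
  unfolding Fobj_def[abs_def] U_def by measurable

lemma adm_F:
  assumes Y: "Y \<in> admissible M B \<mu> r \<sigma> \<tau>" and al: "0 < \<alpha>" "\<alpha> < 1" and k: "0 \<le> k" and g: "0 < \<gamma>"
  shows "integrable M (\<lambda>\<omega>. Fobj \<alpha> k \<gamma> \<theta> (Y \<omega>))"
    "ext_expectation M (\<lambda>\<omega>. Fobj \<alpha> k \<gamma> \<theta> (Y \<omega>)) = ereal (\<integral>\<omega>. Fobj \<alpha> k \<gamma> \<theta> (Y \<omega>) \<partial>M)"
proof -
  note D = adm_D[OF Y]
  have [measurable]: "Y \<in> borel_measurable M" by (rule D(1))
  interpret prob_space M by (rule ps)
  have gi: "integrable M (\<lambda>\<omega>. k * \<gamma> powr \<alpha> + (1 + \<bar>\<theta>\<bar>) * Y \<omega> powr \<alpha>)"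
    using adm_powr[OF Y al] by (intro Bochner_Integration.integrable_add Bochner_Integration.integrable_mult_right) auto
  show int: "integrable M (\<lambda>\<omega>. Fobj \<alpha> k \<gamma> \<theta> (Y \<omega>))"
  proof (rule Bochner_Integration.integrable_bound[OF gi])
    show "(\<lambda>\<omega>. Fobj \<alpha> k \<gamma> \<theta> (Y \<omega>)) \<in> borel_measurable M" by measurable
    show "AE \<omega> in M. norm (Fobj \<alpha> k \<gamma> \<theta> (Y \<omega>)) \<le> norm (k * \<gamma> powr \<alpha> + (1 + \<bar>\<theta>\<bar>) * Y \<omega> powr \<alpha>)"
    proof (rule AE_I2)
      fix \<omega> assume w: "\<omega> \<in> space M"
      have "\<bar>Fobj \<alpha> k \<gamma> \<theta> (Y \<omega>)\<bar> \<le> k * \<gamma> powr \<alpha> + (1 + \<bar>\<theta>\<bar>) * Y \<omega> powr \<alpha>"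
        using F_abs[of \<alpha> k \<gamma> "Y \<omega>" \<theta>] al k g D(2)[OF w] by simp
      then show "norm (Fobj \<alpha> k \<gamma> \<theta> (Y \<omega>)) \<le> norm (k * \<gamma> powr \<alpha> + (1 + \<bar>\<theta>\<bar>) * Y \<omega> powr \<alpha>)" by simp
    qed
  qed
  show "ext_expectation M (\<lambda>\<omega>. Fobj \<alpha> k \<gamma> \<theta> (Y \<omega>)) = ereal (\<integral>\<omega>. Fobj \<alpha> k \<gamma> \<theta> (Y \<omega>) \<partial>M)"
    by (rule ext_expectation_integrable[OF int])
qed

end



context
  fixes M :: "'a measure" and B :: "real \<Rightarrow> 'a \<Rightarrow> real" and \<mu> r \<sigma> \<tau> \<alpha> k \<gamma> \<theta> :: real
  assumes bm: "brownian_motion M B" and sig: "\<sigma> > 0" and phi: "mpr \<mu> r \<sigma> \<noteq> 0" and tau: "\<tau> > 0"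
    and al: "0 < \<alpha>" "\<alpha> < 1" and kk: "0 \<le> k" and gg: "0 < \<gamma>"
begin

abbreviation "Zk \<equiv> pricing_kernel \<mu> r \<sigma> B \<tau>"
abbreviation "FF \<equiv> Fobj \<alpha> k \<gamma> \<theta>"
abbreviation "bb \<equiv> 1 + \<bar>\<theta>\<bar>"

lemmas ZP = Z_pos[OF bm sig phi tau]
lemmas ZM = Z_meas[OF bm sig phi tau]
lemmas ZMA = Z_meas_aug[OF bm sig phi tau]
lemmas ZPI = Z_powr_int[OF bm sig phi tau]
lemmas ZI = Z_int[OF bm sig phi tau]
lemmas ZN = Z_null[OF bm sig phi tau]
lemmas EZP = EZ_pos[OF bm sig phi tau]
lemmas ADM = adm_D[OF bm sig phi tau]
lemmas AZY = adm_ZY[OF bm sig phi tau]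
lemmas AF = adm_F[OF bm sig phi tau _ al kk gg]
lemmas PS = ps[OF bm sig phi tau]

lemma Fc: "continuous_on {0..} FF" using F_cont al by simp
lemma Fg: "0 \<le> y \<Longrightarrow> FF y \<le> bb * y powr \<alpha> + 0" using F_upper[OF al kk gg] by simp
lemma bb0: "0 \<le> bb" by simp

lemma triv: "\<And>y::real. 0 \<le> y \<Longrightarrow> 0 \<le> y" by simp

lemmas YIN = yh_in[OF Fc al bb0 Fg]
lemmas YNN = yh_nonneg[OF Fc al bb0 Fg]
lemmas YAN = yh_anti[OF Fc al bb0 Fg]
lemmas YB = yh_bound[OF Fc al bb0 Fg]
lemmas YM = yh_measurable[OF Fc al bb0 Fg]
lemma YC: "0 < z \<Longrightarrow> z \<notin> Bad FF \<Longrightarrow> isCont (yh FF) z"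
  by (rule yh_cont[of FF \<alpha> bb 0]) (use Fc al Fg in auto)

lemma YM'[measurable]: "yh FF \<in> borel_measurable borel" by (rule YM)

definition gg :: "real \<Rightarrow> real" where
  "gg l = (\<integral>\<omega>. Zk \<omega> * yh FF (l * Zk \<omega>) \<partial>M)"

definition KK :: "real \<Rightarrow> 'a \<Rightarrow> real" where
  "KK l \<omega> = Kb FF \<alpha> 0 bb (l * Zk \<omega>)"

lemma KK_int: "0 < l \<Longrightarrow> integrable M (KK l)"
proof -
  assume l: "0 < l"
  define p where "p = - \<alpha> / (1 - \<alpha>)"
  have e: "KK l \<omega> = 2 * (0 - FF 0) + 2 * (bb powr (1/(1-\<alpha>)) * ((l/2) powr p * Zk \<omega> powr p))" for \<omega>
  proof -
    have "(l * Zk \<omega> / 2) powr p = (l/2) powr p * Zk \<omega> powr p"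
      using l ZP[of \<omega>] by (simp add: powr_mult[symmetric])
    then show ?thesis unfolding KK_def Kb_def p_def by simp
  qed
  interpret prob_space M by (rule PS)
  show ?thesis unfolding e using ZPI[of p]
    by (intro Bochner_Integration.integrable_add Bochner_Integration.integrable_mult_right integrable_const) auto
qed

lemma Kb_anti: "0 < z1 \<Longrightarrow> z1 \<le> z2 \<Longrightarrow> Kb FF \<alpha> 0 bb z2 \<le> Kb FF \<alpha> 0 bb z1"
proof -
  assume z: "0 < z1" "z1 \<le> z2"
  have "(z2/2) powr (-\<alpha>/(1-\<alpha>)) \<le> (z1/2) powr (-\<alpha>/(1-\<alpha>))"
    using z al by (intro powr_mono2') (auto simp: divide_nonpos_pos)
  then show ?thesis unfolding Kb_def by (simp add: mult_left_mono)
qed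

lemma yZ_meas_aug: "(\<lambda>\<omega>. yh FF (l * Zk \<omega>)) \<in> borel_measurable (augmented_filtration M B \<tau>)"
proof -
  have "(\<lambda>\<omega>. l * Zk \<omega>) \<in> borel_measurable (augmented_filtration M B \<tau>)"
    using ZMA by (rule borel_measurable_times[OF borel_measurable_const])
  then show ?thesis using measurable_compose[OF _ YM] by blast
qed

lemma yZ_meas: "(\<lambda>\<omega>. yh FF (l * Zk \<omega>)) \<in> borel_measurable M"
proof -
  have "(\<lambda>\<omega>. l * Zk \<omega>) \<in> borel_measurable M"
    using ZM by (rule borel_measurable_times[OF borel_measurable_const])
  then show ?thesis using measurable_compose[OF _ YM] by blast
qed

lemma s_meas: "(\<lambda>\<omega>. Zk \<omega> * yh FF (l * Zk \<omega>)) \<in> borel_measurable M"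
  using ZM yZ_meas by (rule borel_measurable_times)

lemma s_bound:
  assumes l: "0 < l" and w: "\<omega> \<in> space M"
  shows "0 \<le> Zk \<omega> * yh FF (l * Zk \<omega>)" "Zk \<omega> * yh FF (l * Zk \<omega>) \<le> KK l \<omega> / l"
proof -
  show "0 \<le> Zk \<omega> * yh FF (l * Zk \<omega>)" using ZP[of \<omega>] YNN by simp
  have "(l * Zk \<omega>) * yh FF (l * Zk \<omega>) \<le> KK l \<omega>" unfolding KK_def using YB l ZP[of \<omega>] by simp
  then show "Zk \<omega> * yh FF (l * Zk \<omega>) \<le> KK l \<omega> / l" using l by (simp add: field_simps)
qed

lemma s_int: "0 < l \<Longrightarrow> integrable M (\<lambda>\<omega>. Zk \<omega> * yh FF (l * Zk \<omega>))"
proof -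
  assume l: "0 < l"
  have "integrable M (\<lambda>\<omega>. KK l \<omega> / l)" using KK_int[OF l] by simp
  then show ?thesis
  proof (rule Bochner_Integration.integrable_bound[OF _ s_meas])
    show "AE \<omega> in M. norm (Zk \<omega> * yh FF (l * Zk \<omega>)) \<le> norm (KK l \<omega> / l)"
    proof (rule AE_I2)
      fix \<omega> assume w: "\<omega> \<in> space M"
      have a: "Zk \<omega> * yh FF (l * Zk \<omega>) \<le> KK l \<omega> / l" using s_bound[OF l w] by simp
      have b: "KK l \<omega> / l \<le> \<bar>KK l \<omega> / l\<bar>" by (rule abs_ge_self)
      have c: "\<bar>Zk \<omega> * yh FF (l * Zk \<omega>)\<bar> = Zk \<omega> * yh FF (l * Zk \<omega>)" using s_bound[OF l w] by simp
      show "norm (Zk \<omega> * yh FF (l * Zk \<omega>)) \<le> norm (KK l \<omega> / l)"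
        unfolding real_norm_def c using order_trans[OF a b] .
    qed
  qed
qed

lemma s_mono: "0 < l1 \<Longrightarrow> l1 \<le> l2 \<Longrightarrow> \<omega> \<in> space M \<Longrightarrow> Zk \<omega> * yh FF (l2 * Zk \<omega>) \<le> Zk \<omega> * yh FF (l1 * Zk \<omega>)"
  using YAN[of "l1 * Zk \<omega>" "l2 * Zk \<omega>"] ZP[of \<omega>] by (simp add: mult_right_mono)

lemma gg_anti: "0 < l1 \<Longrightarrow> l1 \<le> l2 \<Longrightarrow> gg l2 \<le> gg l1"
  unfolding gg_def by (intro integral_mono s_int s_mono) auto

lemma gg_small: "\<exists>L>0. \<forall>l\<ge>L. gg l < 1"
proof -
  define I where "I = (\<integral>\<omega>. KK 1 \<omega> \<partial>M)"
  define L where "L = max 1 (I + 1)"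
  have "gg l < 1" if l: "l \<ge> L" for l
  proof -
    have l1: "l \<ge> 1" "l > 0" using l unfolding L_def by auto
    have "gg l \<le> (\<integral>\<omega>. KK 1 \<omega> / l \<partial>M)"
      unfolding gg_def
    proof (intro integral_mono s_int)
      show "integrable M (\<lambda>\<omega>. KK 1 \<omega> / l)" using KK_int[of 1] by simp
      fix \<omega> assume w: "\<omega> \<in> space M"
      have "KK l \<omega> \<le> KK 1 \<omega>" unfolding KK_def using Kb_anti ZP[of \<omega>] l1 by (simp add: mult_right_mono)
      then show "Zk \<omega> * yh FF (l * Zk \<omega>) \<le> KK 1 \<omega> / l"
        using s_bound(2)[OF l1(2) w] l1 by (simp add: divide_right_mono order_trans)
    qed (use l1 in auto)
    also have "\<dots> = I / l" unfolding I_def by simp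
    also have "\<dots> < 1" using l l1 unfolding L_def by (simp add: divide_less_eq)
    finally show ?thesis .
  qed
  then show ?thesis by (intro exI[of _ L]) (auto simp: L_def)
qed

lemma gg_lim:
  assumes ls: "0 < ls" and lim: "sq \<longlonglongrightarrow> ls" and lb: "\<And>n. ls / 2 \<le> sq n"
  shows "(\<lambda>n. gg (sq n)) \<longlonglongrightarrow> gg ls"
  unfolding gg_def
proof (rule integral_dominated_convergence[where w="\<lambda>\<omega>. Zk \<omega> * yh FF (ls / 2 * Zk \<omega>)"])
  show "(\<lambda>\<omega>. Zk \<omega> * yh FF (ls * Zk \<omega>)) \<in> borel_measurable M" by (rule s_meas)
  show "\<And>i. (\<lambda>\<omega>. Zk \<omega> * yh FF (sq i * Zk \<omega>)) \<in> borel_measurable M" by (rule s_meas)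
  show "integrable M (\<lambda>\<omega>. Zk \<omega> * yh FF (ls / 2 * Zk \<omega>))" using ls by (intro s_int) simp
  have "AE \<omega> in M. ls * Zk \<omega> \<notin> Bad FF" using ZN[OF ls Bad_countable] .
  then show "AE \<omega> in M. (\<lambda>i. Zk \<omega> * yh FF (sq i * Zk \<omega>)) \<longlonglongrightarrow> Zk \<omega> * yh FF (ls * Zk \<omega>)"
  proof eventually_elim
    fix \<omega> assume nb: "ls * Zk \<omega> \<notin> Bad FF"
    have "isCont (yh FF) (ls * Zk \<omega>)" using YC[OF _ nb] ls ZP[of \<omega>] by simp
    moreover have "(\<lambda>i. sq i * Zk \<omega>) \<longlonglongrightarrow> ls * Zk \<omega>" by (intro tendsto_mult_right lim)
    ultimately have "(\<lambda>i. yh FF (sq i * Zk \<omega>)) \<longlonglongrightarrow> yh FF (ls * Zk \<omega>)" by (rule isCont_tendsto_compose)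
    then show "(\<lambda>i. Zk \<omega> * yh FF (sq i * Zk \<omega>)) \<longlonglongrightarrow> Zk \<omega> * yh FF (ls * Zk \<omega>)" by (intro tendsto_mult_left)
  qed
  fix i
  show "AE \<omega> in M. norm (Zk \<omega> * yh FF (sq i * Zk \<omega>)) \<le> Zk \<omega> * yh FF (ls / 2 * Zk \<omega>)"
  proof (rule AE_I2)
    fix \<omega> assume w: "\<omega> \<in> space M"
    have "0 < ls / 2" using ls by simp
    have a: "Zk \<omega> * yh FF (sq i * Zk \<omega>) \<le> Zk \<omega> * yh FF (ls / 2 * Zk \<omega>)"
      using s_mono[OF \<open>0 < ls / 2\<close> lb w] .
    have c: "0 \<le> Zk \<omega> * yh FF (sq i * Zk \<omega>)" using ZP[of \<omega>] YNN by simp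
    show "norm (Zk \<omega> * yh FF (sq i * Zk \<omega>)) \<le> Zk \<omega> * yh FF (ls / 2 * Zk \<omega>)" using a c by simp
  qed
qed

lemma dual_I:
  assumes l0: "0 < l0" "1 \<le> gg l0"
  shows "\<exists>ls>0. gg ls = 1"
proof -
  obtain L where L: "L > 0" "\<And>l. l \<ge> L \<Longrightarrow> gg l < 1" using gg_small by auto
  define Lam where "Lam = {l. 0 < l \<and> 1 \<le> gg l}"
  define ls where "ls = Sup Lam"
  have ne: "Lam \<noteq> {}" using l0 unfolding Lam_def by auto
  have bdd: "bdd_above Lam"
  proof (rule bdd_aboveI)
    fix x assume "x \<in> Lam"
    then show "x \<le> L" using L(2)[of x] unfolding Lam_def by force
  qed
  have "l0 \<le> ls" unfolding ls_def using l0 bdd by (intro cSup_upper) (auto simp: Lam_def)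
  then have ls0: "0 < ls" using l0 by simp
  have below: "1 \<le> gg l" if lp: "0 < l" "l < ls" for l
  proof -
    obtain x where "x \<in> Lam" "l < x" using less_cSup_iff[OF ne bdd] lp unfolding ls_def by auto
    then show ?thesis using gg_anti[of l x] lp unfolding Lam_def by auto
  qed
  have above: "gg l < 1" if "ls < l" for l
  proof (rule ccontr)
    assume "\<not> gg l < 1"
    then have "l \<in> Lam" using that ls0 unfolding Lam_def by auto
    then have "l \<le> ls" unfolding ls_def using bdd by (rule cSup_upper)
    then show False using that by simp
  qed
  define a where "a n = ls - ls / (real n + 2)" for n
  have adiv: "ls / (real n + 2) \<le> ls / 2" "0 < ls / (real n + 2)" for n
  proof -
    show "ls / (real n + 2) \<le> ls / 2" using ls0 by (intro divide_left_mono) auto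
    show "0 < ls / (real n + 2)" using ls0 by simp
  qed
  have "(\<lambda>n. ls / (real n + 2)) \<longlonglongrightarrow> 0"
  proof -
    have "(\<lambda>n. inverse (real (Suc (Suc n)))) \<longlonglongrightarrow> 0"
      by (rule LIMSEQ_Suc[OF LIMSEQ_inverse_real_of_nat])
    then have "(\<lambda>n. ls * inverse (real (Suc (Suc n)))) \<longlonglongrightarrow> ls * 0"
      by (intro tendsto_mult tendsto_const)
    moreover have "\<And>n. ls * inverse (real (Suc (Suc n))) = ls / (real n + 2)"
      by (simp add: divide_inverse add.commute)
    ultimately show ?thesis by simp
  qed
  then have alim: "a \<longlonglongrightarrow> ls"
    unfolding a_def using tendsto_diff[OF tendsto_const, of "\<lambda>n. ls / (real n + 2)" 0 sequentially ls] by simp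
  have "ls / 2 \<le> a n" for n
  proof -
    have "ls / (real n + 2) \<le> ls / 2" by (rule adiv)
    then show ?thesis unfolding a_def by linarith
  qed
  then have "(\<lambda>n. gg (a n)) \<longlonglongrightarrow> gg ls"
    using gg_lim[OF ls0 alim] by blast
  moreover have "1 \<le> gg (a n)" for n using below[of "a n"] adiv[of n] ls0 unfolding a_def by simp
  ultimately have ge: "1 \<le> gg ls" by (intro LIMSEQ_le_const) auto
  define b where "b n = ls + 1 / (real n + 1)" for n
  have "(\<lambda>n. 1 / (real n + 1)) \<longlonglongrightarrow> 0"
    using LIMSEQ_inverse_real_of_nat by (simp add: inverse_eq_divide add.commute)
  then have blim: "b \<longlonglongrightarrow> ls"
    unfolding b_def using tendsto_add[OF tendsto_const, of "\<lambda>n. 1 / (real n + 1)" 0 sequentially ls] by simp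
  have bpos: "ls < b n" for n unfolding b_def by simp
  have "ls / 2 \<le> b n" for n using bpos[of n] ls0 by linarith
  then have "(\<lambda>n. gg (b n)) \<longlonglongrightarrow> gg ls"
    using gg_lim[OF ls0 blim] by blast
  moreover have "gg (b n) \<le> 1" for n using above[OF bpos[of n]] by simp
  ultimately have le: "gg ls \<le> 1" by (intro LIMSEQ_le_const2) auto
  show ?thesis using ge le ls0 by auto
qed

lemma dual_II:
  assumes small: "\<And>l. 0 < l \<Longrightarrow> gg l < 1"
  shows "\<exists>L. L \<in> Amax FF 0 \<and> L * (\<integral>\<omega>. Zk \<omega> \<partial>M) \<le> 1"
proof -
  define EZ where "EZ = (\<integral>\<omega>. Zk \<omega> \<partial>M)"
  have EZ0: "0 < EZ" unfolding EZ_def by (rule EZP)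
  have bnd: "yh FF z0 * EZ \<le> 1" if z0: "0 < z0" for z0
  proof -
    define h where "h n \<omega> = indicator {..real n + 1} (Zk \<omega>) * Zk \<omega>" for n \<omega>
    have hm: "h n \<in> borel_measurable M" for n
      unfolding h_def by (intro borel_measurable_times measurable_compose[OF ZM] borel_measurable_indicator ZM) auto
    have hb: "norm (h n \<omega>) \<le> Zk \<omega>" for n \<omega>
      unfolding h_def using ZP[of \<omega>] by (simp add: indicator_def abs_mult)
    have hi: "integrable M (h n)" for n
    proof (rule Bochner_Integration.integrable_bound[OF ZI hm])
      show "AE x in M. norm (h n x) \<le> norm (Zk x)"
      proof (rule AE_I2)
        fix x show "norm (h n x) \<le> norm (Zk x)" using hb[of n x] ZP[of x] by simp
      qed
    qed
    have lim: "(\<lambda>n. integral\<^sup>L M (h n)) \<longlonglongrightarrow> EZ"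
      unfolding EZ_def
    proof (rule integral_dominated_convergence[where w=Zk])
      show "Zk \<in> borel_measurable M" using ZM by simp
      show "\<And>i. h i \<in> borel_measurable M" by (rule hm)
      show "integrable M Zk" using ZI by simp
      show "\<And>i. AE x in M. norm (h i x) \<le> Zk x" using hb by simp
      show "AE x in M. (\<lambda>i. h i x) \<longlonglongrightarrow> Zk x"
      proof (rule AE_I2)
        fix \<omega>
        obtain N :: nat where N: "Zk \<omega> \<le> real N" using real_arch_simple by blast
        have "\<forall>n\<ge>N. h n \<omega> = Zk \<omega>" unfolding h_def using N by (auto simp: indicator_def)
        then have "eventually (\<lambda>n. h n \<omega> = Zk \<omega>) sequentially" by (auto simp: eventually_sequentially)
        then show "(\<lambda>i. h i \<omega>) \<longlonglongrightarrow> Zk \<omega>" by (rule tendsto_eventually)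
      qed
    qed
    have le1: "yh FF z0 * integral\<^sup>L M (h n) \<le> 1" for n
    proof -
      define l where "l = z0 / (real n + 1)"
      have l0: "0 < l" unfolding l_def using z0 by simp
      have "yh FF z0 * integral\<^sup>L M (h n) = (\<integral>\<omega>. yh FF z0 * h n \<omega> \<partial>M)" by simp
      also have "\<dots> \<le> gg l" unfolding gg_def
      proof (rule integral_mono)
        show "integrable M (\<lambda>\<omega>. yh FF z0 * h n \<omega>)" using hi by simp
        show "integrable M (\<lambda>\<omega>. Zk \<omega> * yh FF (l * Zk \<omega>))" using s_int[OF l0] .
        fix \<omega> assume w: "\<omega> \<in> space M"
        show "yh FF z0 * h n \<omega> \<le> Zk \<omega> * yh FF (l * Zk \<omega>)"
        proof (cases "Zk \<omega> \<le> real n + 1")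
          case True
          have "l * Zk \<omega> \<le> l * (real n + 1)" using True l0 by (intro mult_left_mono) auto
          also have "\<dots> = z0" unfolding l_def by simp
          finally have "yh FF z0 \<le> yh FF (l * Zk \<omega>)" using YAN[of "l * Zk \<omega>" z0] l0 ZP[of \<omega>] by simp
          then show ?thesis unfolding h_def using True ZP[of \<omega>] by (simp add: mult.commute mult_left_mono)
        next
          case False
          then show ?thesis unfolding h_def using ZP[of \<omega>] YNN by simp
        qed
      qed
      also have "\<dots> < 1" using small[OF l0] .
      finally show ?thesis by simp
    qed
    have "(\<lambda>n. yh FF z0 * integral\<^sup>L M (h n)) \<longlonglongrightarrow> yh FF z0 * EZ" by (intro tendsto_mult_left lim)
    then show ?thesis using le1 by (intro LIMSEQ_le_const2) auto
  qed
  define Ys where "Ys n = yh FF (1 / (real n + 1))" for n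
  have inc: "incseq Ys"
  proof (rule incseq_SucI)
    fix n
    have "1 / (real (Suc n) + 1) \<le> 1 / (real n + 1)" by (simp add: frac_le)
    then show "Ys n \<le> Ys (Suc n)" unfolding Ys_def using YAN by simp
  qed
  have Ysb: "Ys n \<le> 1 / EZ" for n
    using bnd[of "1 / (real n + 1)"] EZ0 unfolding Ys_def by (simp add: field_simps)
  have bdd: "bdd_above (range Ys)" using Ysb by (intro bdd_aboveI2) auto
  have lim: "Ys \<longlonglongrightarrow> (SUP n. Ys n)" by (rule LIMSEQ_incseq_SUP[OF bdd inc])
  have zl: "(\<lambda>n. 1 / (real n + 1)) \<longlonglongrightarrow> 0"
    using LIMSEQ_inverse_real_of_nat by (simp add: inverse_eq_divide add.commute)
  have "(SUP n. Ys n) \<in> Amax FF 0"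
    by (rule Amax_closed[OF Fc _ lim zl]) (simp add: Ys_def YIN)
  moreover have "(SUP n. Ys n) \<le> 1 / EZ" using Ysb by (intro cSUP_least) auto
  then have "(SUP n. Ys n) * EZ \<le> 1" using EZ0 by (simp add: field_simps)
  ultimately show ?thesis unfolding EZ_def by blast
qed

lemma dual:
  "\<exists>l\<ge>0. \<exists>Yh \<in> admissible M B \<mu> r \<sigma> \<tau>. (\<forall>\<omega>\<in>space M. Yh \<omega> \<in> Amax FF (l * Zk \<omega>)) \<and>
      (l = 0 \<or> (\<integral>\<omega>. Zk \<omega> * Yh \<omega> \<partial>M) = 1)"
proof (cases "\<exists>l0>0. 1 \<le> gg l0")
  case True
  then obtain l0 where "0 < l0" "1 \<le> gg l0" by auto
  then obtain ls where ls: "0 < ls" "gg ls = 1" using dual_I by blast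
  define Yh where "Yh \<omega> = yh FF (ls * Zk \<omega>)" for \<omega>
  have nn: "AE \<omega> in M. 0 \<le> Zk \<omega> * yh FF (ls * Zk \<omega>)"
    using ZP YNN by (intro AE_I2) (simp add: less_imp_le)
  have "(\<integral>\<^sup>+\<omega>. ennreal (Zk \<omega> * Yh \<omega>) \<partial>M) = ennreal (gg ls)"
    unfolding Yh_def gg_def using nn_integral_eq_integral[OF s_int[OF ls(1)] nn] by simp
  then have adm: "Yh \<in> admissible M B \<mu> r \<sigma> \<tau>"
    unfolding admissible_def Yh_def using yZ_meas_aug YNN ls by simp
  have "\<forall>\<omega>\<in>space M. Yh \<omega> \<in> Amax FF (ls * Zk \<omega>)"
    unfolding Yh_def using YIN ZP ls by simp
  moreover have "(\<integral>\<omega>. Zk \<omega> * Yh \<omega> \<partial>M) = 1" using ls unfolding gg_def Yh_def by simp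
  ultimately show ?thesis using adm ls by (intro exI[of _ ls]) auto
next
  case False
  then have "\<And>l. 0 < l \<Longrightarrow> gg l < 1" by force
  then obtain L where L: "L \<in> Amax FF 0" "L * (\<integral>\<omega>. Zk \<omega> \<partial>M) \<le> 1" using dual_II by blast
  have L0: "0 \<le> L" using L unfolding Amax_def by simp
  have "(\<integral>\<^sup>+\<omega>. ennreal (Zk \<omega> * L) \<partial>M) = ennreal (\<integral>\<omega>. Zk \<omega> * L \<partial>M)"
    using ZI L0 ZP by (intro nn_integral_eq_integral) (auto intro!: AE_I2 simp: less_imp_le)
  also have "(\<integral>\<omega>. Zk \<omega> * L \<partial>M) = L * (\<integral>\<omega>. Zk \<omega> \<partial>M)" by simp
  finally have "(\<integral>\<^sup>+\<omega>. ennreal (Zk \<omega> * L) \<partial>M) \<le> 1" using L(2) by (simp add: ennreal_le_1)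
  then have adm: "(\<lambda>\<omega>. L) \<in> admissible M B \<mu> r \<sigma> \<tau>"
    unfolding admissible_def using L0 by simp
  show ?thesis using adm L(1) by (intro exI[of _ 0]) auto
qed

lemma charac:
  assumes l: "0 \<le> l" and Yh: "Yh \<in> admissible M B \<mu> r \<sigma> \<tau>"
    and Ya: "\<forall>\<omega>\<in>space M. Yh \<omega> \<in> Amax FF (l * Zk \<omega>)"
    and bud: "l = 0 \<or> (\<integral>\<omega>. Zk \<omega> * Yh \<omega> \<partial>M) = 1"
    and mx: "is_maximizer M B \<mu> r \<sigma> \<tau> \<alpha> k \<gamma> \<theta> Y1"
  shows "AE \<omega> in M. Y1 \<omega> \<in> Amax FF (l * Zk \<omega>)"
proof -
  have Y1: "Y1 \<in> admissible M B \<mu> r \<sigma> \<tau>" using mx unfolding is_maximizer_def by simp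
  have "ext_expectation M (\<lambda>\<omega>. FF (Yh \<omega>)) \<le> ext_expectation M (\<lambda>\<omega>. FF (Y1 \<omega>))"
    using mx Yh unfolding is_maximizer_def by simp
  then have ile: "(\<integral>\<omega>. FF (Yh \<omega>) \<partial>M) \<le> (\<integral>\<omega>. FF (Y1 \<omega>) \<partial>M)"
    using AF(2)[OF Yh] AF(2)[OF Y1] by simp
  define D where "D \<omega> = (FF (Yh \<omega>) - FF (Y1 \<omega>)) + l * (Zk \<omega> * Y1 \<omega> - Zk \<omega> * Yh \<omega>)" for \<omega>
  have Dint: "integrable M D" unfolding D_def
    using AF(1)[OF Yh] AF(1)[OF Y1] AZY(1)[OF Yh] AZY(1)[OF Y1]
    by (intro Bochner_Integration.integrable_add Bochner_Integration.integrable_diff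
        Bochner_Integration.integrable_mult_right) auto
  have Dnn: "0 \<le> D \<omega>" if w: "\<omega> \<in> space M" for \<omega>
  proof -
    have "Y1 \<omega> \<ge> 0" using ADM(2)[OF Y1 w] .
    then have "FF (Y1 \<omega>) - (l * Zk \<omega>) * Y1 \<omega> \<le> FF (Yh \<omega>) - (l * Zk \<omega>) * Yh \<omega>"
      using Ya w unfolding Amax_def by auto
    then show ?thesis unfolding D_def by (simp add: algebra_simps)
  qed
  have "(\<integral>\<omega>. D \<omega> \<partial>M) = ((\<integral>\<omega>. FF (Yh \<omega>) \<partial>M) - (\<integral>\<omega>. FF (Y1 \<omega>) \<partial>M))
      + l * ((\<integral>\<omega>. Zk \<omega> * Y1 \<omega> \<partial>M) - (\<integral>\<omega>. Zk \<omega> * Yh \<omega> \<partial>M))"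
    unfolding D_def using AF(1)[OF Yh] AF(1)[OF Y1] AZY(1)[OF Yh] AZY(1)[OF Y1]
    by (simp add: Bochner_Integration.integral_add Bochner_Integration.integral_diff)
  also have "\<dots> \<le> 0"
  proof -
    have "l * ((\<integral>\<omega>. Zk \<omega> * Y1 \<omega> \<partial>M) - (\<integral>\<omega>. Zk \<omega> * Yh \<omega> \<partial>M)) \<le> 0"
    proof (cases "l = 0")
      case False
      then have "(\<integral>\<omega>. Zk \<omega> * Yh \<omega> \<partial>M) = 1" using bud by simp
      moreover have "(\<integral>\<omega>. Zk \<omega> * Y1 \<omega> \<partial>M) \<le> 1" using AZY(2)[OF Y1] .
      ultimately show ?thesis using l by (simp add: mult_nonneg_nonpos)
    qed simp
    then show ?thesis using ile by simp
  qed
  moreover have "0 \<le> (\<integral>\<omega>. D \<omega> \<partial>M)" using integral_nonneg_AE[OF AE_I2[OF Dnn]] .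
  ultimately have "(\<integral>\<omega>. D \<omega> \<partial>M) = 0" by simp
  then have "AE \<omega> in M. D \<omega> = 0" using integral_nonneg_eq_0_iff_AE[OF Dint AE_I2[OF Dnn]] by simp
  moreover have "AE \<omega> in M. \<omega> \<in> space M" by (rule AE_space)
  ultimately show ?thesis
  proof eventually_elim
    fix \<omega> assume D0: "D \<omega> = 0" and w: "\<omega> \<in> space M"
    have Y0: "Y1 \<omega> \<ge> 0" using ADM(2)[OF Y1 w] .
    have "FF u - (l * Zk \<omega>) * u \<le> FF (Y1 \<omega>) - (l * Zk \<omega>) * Y1 \<omega>" if u: "0 \<le> u" for u
    proof -
      have "FF u - (l * Zk \<omega>) * u \<le> FF (Yh \<omega>) - (l * Zk \<omega>) * Yh \<omega>" using Ya w u unfolding Amax_def by auto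
      moreover have "FF (Yh \<omega>) - (l * Zk \<omega>) * Yh \<omega> = FF (Y1 \<omega>) - (l * Zk \<omega>) * Y1 \<omega>"
        using D0 unfolding D_def by (simp add: algebra_simps)
      ultimately show ?thesis by simp
    qed
    then show "Y1 \<omega> \<in> Amax FF (l * Zk \<omega>)" unfolding Amax_def using Y0 by simp
  qed
qed

lemma part1:
  assumes th: "\<theta> \<noteq> lower_theta \<alpha> k"
    and m1: "is_maximizer M B \<mu> r \<sigma> \<tau> \<alpha> k \<gamma> \<theta> Y1" and m2: "is_maximizer M B \<mu> r \<sigma> \<tau> \<alpha> k \<gamma> \<theta> Y2"
  shows "measure M {\<omega> \<in> space M. Y1 \<omega> = Y2 \<omega>} = 1"
proof -
  interpret prob_space M by (rule PS)
  obtain l Yh where l: "0 \<le> l" and Yh: "Yh \<in> admissible M B \<mu> r \<sigma> \<tau>"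
    and Ya: "\<forall>\<omega>\<in>space M. Yh \<omega> \<in> Amax FF (l * Zk \<omega>)"
    and bud: "l = 0 \<or> (\<integral>\<omega>. Zk \<omega> * Yh \<omega> \<partial>M) = 1"
    using dual by blast
  have A1: "AE \<omega> in M. Y1 \<omega> \<in> Amax FF (l * Zk \<omega>)" by (rule charac[OF l Yh Ya bud m1])
  have A2: "AE \<omega> in M. Y2 \<omega> \<in> Amax FF (l * Zk \<omega>)" by (rule charac[OF l Yh Ya bud m2])
  have AE: "AE \<omega> in M. Y1 \<omega> = Y2 \<omega>"
  proof (cases "l = 0")
    case True
    from A1 A2 show ?thesis
    proof eventually_elim
      fix \<omega> assume "Y1 \<omega> \<in> Amax FF (l * Zk \<omega>)" "Y2 \<omega> \<in> Amax FF (l * Zk \<omega>)"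
      then show "Y1 \<omega> = Y2 \<omega>" using argmax_unique[OF al kk gg th] True by simp
    qed
  next
    case False
    then have l0: "0 < l" using l by simp
    have "AE \<omega> in M. l * Zk \<omega> \<notin> Bad FF" by (rule ZN[OF l0 Bad_countable])
    with A1 A2 show ?thesis
    proof eventually_elim
      fix \<omega> assume a: "Y1 \<omega> \<in> Amax FF (l * Zk \<omega>)" "Y2 \<omega> \<in> Amax FF (l * Zk \<omega>)" "l * Zk \<omega> \<notin> Bad FF"
      have pos: "0 < l * Zk \<omega>" using l0 ZP[of \<omega>] by simp
      show "Y1 \<omega> = Y2 \<omega>"
      proof (rule ccontr)
        assume "Y1 \<omega> \<noteq> Y2 \<omega>"
        then consider "Y1 \<omega> < Y2 \<omega>" | "Y2 \<omega> < Y1 \<omega>" by linarith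
        then have "l * Zk \<omega> \<in> Bad FF" using a(1,2) pos unfolding Bad_def by cases blast+
        then show False using a(3) by simp
      qed
    qed
  qed
  have Y1m: "Y1 \<in> borel_measurable M" using ADM(1) m1 unfolding is_maximizer_def by blast
  have Y2m: "Y2 \<in> borel_measurable M" using ADM(1) m2 unfolding is_maximizer_def by blast
  have "{\<omega> \<in> space M. Y1 \<omega> = Y2 \<omega>} \<in> sets M" using Y1m Y2m by (rule borel_measurable_eq)
  then show ?thesis using prob_Collect_eq_1[of "\<lambda>\<omega>. Y1 \<omega> = Y2 \<omega>"] AE by simp
qed

lemma part2:
  assumes k0: "0 < k" and th: "\<theta> = lower_theta \<alpha> k" and Y: "Y \<in> admissible M B \<mu> r \<sigma> \<tau>"
  shows "is_maximizer M B \<mu> r \<sigma> \<tau> \<alpha> k \<gamma> \<theta> Y \<longleftrightarrow>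
         measure M {\<omega> \<in> space M. Y \<omega> \<in> {0, \<gamma> * (1 + k powr (- 1 / (1 - \<alpha>)))}} = 1"
proof -
  interpret prob_space M by (rule PS)
  define ys where "ys = \<gamma> * (1 + k powr (- 1 / (1 - \<alpha>)))"
  define c where "c = - (k * \<gamma> powr \<alpha>)"
  have Fle: "FF y \<le> c" if "0 \<le> y" for y
    unfolding c_def th using LT_main_pos(1)[OF al k0 gg that] .
  have Feq: "FF y = c \<longleftrightarrow> y \<in> {0, ys}" if y0: "0 \<le> y" for y
  proof
    assume e: "FF y = c"
    show "y \<in> {0, ys}"
    proof (rule ccontr)
      assume "y \<notin> {0, ys}"
      then have "0 < y" "y \<noteq> ys" using y0 by auto
      then have "FF y < c" unfolding c_def th ys_def using LT_main_pos(2)[OF al k0 gg y0] by simp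
      then show False using e by simp
    qed
  next
    assume "y \<in> {0, ys}"
    then show "FF y = c"
      unfolding c_def th ys_def using F_at0[of \<alpha> \<gamma> k "lower_theta \<alpha> k"] F_ystar[OF al k0 gg] al gg by auto
  qed
  note D = ADM[OF Y]
  have Ym: "Y \<in> borel_measurable M" by (rule D(1))
  have Sm: "{\<omega> \<in> space M. Y \<omega> \<in> {0, ys}} \<in> sets M"
  proof -
    have "Y -` {0, ys} \<inter> space M \<in> sets M" using Ym by (rule measurable_sets) simp
    moreover have "Y -` {0, ys} \<inter> space M = {\<omega> \<in> space M. Y \<omega> \<in> {0, ys}}" by auto
    ultimately show ?thesis by simp
  qed
  have intle: "(\<integral>\<omega>. FF (Y' \<omega>) \<partial>M) \<le> c" if Y': "Y' \<in> admissible M B \<mu> r \<sigma> \<tau>" for Y'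
  proof -
    have "(\<integral>\<omega>. FF (Y' \<omega>) \<partial>M) \<le> (\<integral>\<omega>. c \<partial>M)"
      using AF(1)[OF Y'] ADM(2)[OF Y'] Fle by (intro integral_mono) auto
    then show ?thesis by (simp add: prob_space)
  qed
  show ?thesis
    unfolding ys_def[symmetric]
  proof
    assume mx: "is_maximizer M B \<mu> r \<sigma> \<tau> \<alpha> k \<gamma> \<theta> Y"
    have Z0: "(\<lambda>\<omega>. 0::real) \<in> admissible M B \<mu> r \<sigma> \<tau>" unfolding admissible_def by simp
    have "ext_expectation M (\<lambda>\<omega>. FF 0) \<le> ext_expectation M (\<lambda>\<omega>. FF (Y \<omega>))"
      using mx Z0 unfolding is_maximizer_def by force
    then have "(\<integral>\<omega>. FF 0 \<partial>M) \<le> (\<integral>\<omega>. FF (Y \<omega>) \<partial>M)"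
      using AF(2)[OF Z0] AF(2)[OF Y] by simp
    moreover have "FF 0 = c" using Feq[of 0] by simp
    ultimately have ge: "c \<le> (\<integral>\<omega>. FF (Y \<omega>) \<partial>M)" by (simp add: prob_space)
    define g where "g \<omega> = c - FF (Y \<omega>)" for \<omega>
    have gi: "integrable M g" unfolding g_def using AF(1)[OF Y] by simp
    have gn: "\<And>\<omega>. \<omega> \<in> space M \<Longrightarrow> 0 \<le> g \<omega>" unfolding g_def using Fle D(2) by simp
    have "(\<integral>\<omega>. g \<omega> \<partial>M) = c - (\<integral>\<omega>. FF (Y \<omega>) \<partial>M)"
      unfolding g_def using AF(1)[OF Y] by (simp add: prob_space)
    then have "(\<integral>\<omega>. g \<omega> \<partial>M) \<le> 0" using ge by simp
    moreover have "0 \<le> (\<integral>\<omega>. g \<omega> \<partial>M)" using integral_nonneg_AE[OF AE_I2[OF gn]] .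
    ultimately have "(\<integral>\<omega>. g \<omega> \<partial>M) = 0" by simp
    then have "AE \<omega> in M. g \<omega> = 0" using integral_nonneg_eq_0_iff_AE[OF gi AE_I2[OF gn]] by simp
    moreover have "AE \<omega> in M. \<omega> \<in> space M" by (rule AE_space)
    ultimately have "AE \<omega> in M. Y \<omega> \<in> {0, ys}"
    proof eventually_elim
      fix \<omega> assume "g \<omega> = 0" "\<omega> \<in> space M"
      then show "Y \<omega> \<in> {0, ys}" using Feq[of "Y \<omega>"] D(2) unfolding g_def by simp
    qed
    then show "measure M {\<omega> \<in> space M. Y \<omega> \<in> {0, ys}} = 1" using prob_Collect_eq_1[OF Sm] by simp
  next
    assume "measure M {\<omega> \<in> space M. Y \<omega> \<in> {0, ys}} = 1"
    then have AEY: "AE \<omega> in M. Y \<omega> \<in> {0, ys}" using prob_Collect_eq_1[OF Sm] by simp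
    have "AE \<omega> in M. FF (Y \<omega>) = c"
      using AEY AE_space
    proof eventually_elim
      fix \<omega> assume "Y \<omega> \<in> {0, ys}" "\<omega> \<in> space M"
      then show "FF (Y \<omega>) = c" using Feq[of "Y \<omega>"] D(2) by simp
    qed
    then have "(\<integral>\<omega>. FF (Y \<omega>) \<partial>M) = (\<integral>\<omega>. c \<partial>M)" by (rule integral_cong_AE[rotated 2]) (use AF(1)[OF Y] in auto)
    then have iY: "(\<integral>\<omega>. FF (Y \<omega>) \<partial>M) = c" by (simp add: prob_space)
    show "is_maximizer M B \<mu> r \<sigma> \<tau> \<alpha> k \<gamma> \<theta> Y"
      unfolding is_maximizer_def
    proof (intro conjI ballI)
      show "Y \<in> admissible M B \<mu> r \<sigma> \<tau>" by (rule Y)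
      fix Y' assume Y': "Y' \<in> admissible M B \<mu> r \<sigma> \<tau>"
      show "ext_expectation M (\<lambda>\<omega>. FF (Y' \<omega>)) \<le> ext_expectation M (\<lambda>\<omega>. FF (Y \<omega>))"
        using AF(2)[OF Y'] AF(2)[OF Y] intle[OF Y'] iY by simp
    qed
  qed
qed

end


theorem proposition4p3:
  fixes M :: "'a measure" and B :: "real \<Rightarrow> 'a \<Rightarrow> real"
    and \<mu> r \<sigma> \<tau> \<alpha> k \<gamma> \<theta> :: real
  assumes "complete_measure M"
    and "brownian_motion M B"
    and "\<sigma> > 0" and "mpr \<mu> r \<sigma> \<noteq> 0"
    and "\<tau> > 0" and "0 < \<alpha>" and "\<alpha> < 1" and "k \<ge> 0" and "\<gamma> > 0"
  shows "(\<theta> \<noteq> lower_theta \<alpha> k \<longrightarrow>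
            (\<forall>Y1 Y2. is_maximizer M B \<mu> r \<sigma> \<tau> \<alpha> k \<gamma> \<theta> Y1 \<and>
                     is_maximizer M B \<mu> r \<sigma> \<tau> \<alpha> k \<gamma> \<theta> Y2 \<longrightarrow>
                     measure M {\<omega> \<in> space M. Y1 \<omega> = Y2 \<omega>} = 1)) \<and>
         (\<theta> = lower_theta \<alpha> k \<and> k > 0 \<longrightarrow>
            (\<forall>Y \<in> admissible M B \<mu> r \<sigma> \<tau>.
               is_maximizer M B \<mu> r \<sigma> \<tau> \<alpha> k \<gamma> \<theta> Y \<longleftrightarrow>
               measure M {\<omega> \<in> space M. Y \<omega> \<in> {0, \<gamma> * (1 + k powr (- 1 / (1 - \<alpha>)))}} = 1))"
  using part1[OF assms(2-9)] part2[OF assms(2-9)] by blast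

end
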